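(* Let $M$ be a list of integers and let $\lambda$, $n$ and $m\ge3$ be positive integers. Suppose there is an $(M,m,2)$-decomposition of $\lambda K_n$ in which an $m$-cycle and a $2$-cycle share at least one vertex. Then there is an $(M,m-1,3)$-decomposition of $\lambda K_n$.
   Context: Graphs may have multiple edges but no loops. $\lambda K_n$ is the complete multigraph on $n$ vertices with $\lambda$ edges joining each pair of distinct vertices. For $m\ge 2$, an $m$-cycle is a cycle with $m$ edges; a $2$-cycle consists of two parallel edges. A list is a finite multiset of integers. $(M,a,b)$ denotes $M$ with entries $a,b$ appended. Let $K$ be a graph and let $M=(m_1,\dots,m_t)$ be a list with every $m_i\ge 2$. If every vertex of $K$ has even degree, an $(M)$-decomposition of $K$ is a decomposition $\{G_1,\dots,G_t\}$ of $K$ in which $G_i$ is an $m_i$-cycle for each $i$. If every vertex of $K$ has odd degree, an $(M)$-decomposition of $K$ is a decomposition $\{G_1,\dots,G_t,I\}$ of $K$ in which $G_i$ is an $m_i$-cycle for each $i$ and $I$ is a perfect matching. *)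

theory Defs
  imports "HOL-Library.Multiset"
begin

text \<open>A multigraph on vertex set V is given by a multiset of edges; an edge is a
  2-element set of vertices (so multiple edges are allowed, loops are not).\<close>

type_synonym mgraph = "nat set multiset"

definition complete_multigraph :: "nat \<Rightarrow> nat \<Rightarrow> mgraph" where
  "complete_multigraph lam n =
     (\<Sum>e\<in>{e. \<exists>i j. i < n \<and> j < n \<and> i \<noteq> j \<and> e = {i, j}}. replicate_mset lam e)"

definition degree :: "mgraph \<Rightarrow> nat \<Rightarrow> nat" where
  "degree E v = size (filter_mset (\<lambda>e. v \<in> e) E)"

text \<open>An m-cycle, given by its cyclic list of distinct vertices (m \<ge> 2;
  for m = 2 it consists of two parallel edges).\<close>
definition cycle_edges :: "nat list \<Rightarrow> mgraph" where
  "cycle_edges vs =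
     mset (map (\<lambda>i. {vs ! i, vs ! ((i + 1) mod length vs)}) [0..<length vs])"

definition is_cycle :: "nat \<Rightarrow> nat list \<Rightarrow> bool" where
  "is_cycle m vs \<longleftrightarrow> m \<ge> 2 \<and> length vs = m \<and> distinct vs"

definition perfect_matching :: "nat set \<Rightarrow> mgraph \<Rightarrow> bool" where
  "perfect_matching V I \<longleftrightarrow> (\<forall>e\<in>#I. card e = 2 \<and> e \<subseteq> V) \<and> (\<forall>v\<in>V. degree I v = 1)"

definition is_decomposition :: "nat set \<Rightarrow> mgraph \<Rightarrow> nat list \<Rightarrow> nat list list \<Rightarrow> mgraph \<Rightarrow> bool" where
  "is_decomposition V E M Gs I \<longleftrightarrow>
     length Gs = length M \<and>
     (\<forall>i < length M. is_cycle (M ! i) (Gs ! i)) \<and>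
     ( ((\<forall>v\<in>V. even (degree E v)) \<and> I = {#} \<and>
          E = (\<Sum>G\<leftarrow>Gs. cycle_edges G))
     \<or> ((\<forall>v\<in>V. odd (degree E v)) \<and> perfect_matching V I \<and>
          E = (\<Sum>G\<leftarrow>Gs. cycle_edges G) + I))"

definition has_decomposition :: "nat set \<Rightarrow> mgraph \<Rightarrow> nat list \<Rightarrow> bool" where
  "has_decomposition V E M \<longleftrightarrow> (\<exists>Gs I. is_decomposition V E M Gs I)"

end

theory Submission
  imports Defs "HOL-Library.Function_Algebras"
begin


fun path_edges :: "nat list \<Rightarrow> mgraph" where
  "path_edges (a # b # rest) = add_mset {a,b} (path_edges (b # rest))"
| "path_edges _ = {#}"

lemma path_edges_nth: "path_edges xs = mset (map (\<lambda>i. {xs!i, xs!(i+1)}) [0..<length xs - 1])"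
proof (induction xs rule: path_edges.induct)
  case (1 a b rest)
  have "[0..<length (a#b#rest) - 1] = 0 # map Suc [0..<length rest]"
    by (simp add: upt_conv_Cons map_Suc_upt del: upt_Suc)
  then show ?case using 1 by (simp add: comp_def)
qed auto

lemma cycle_edges_Cons: "cycle_edges (x#xs) = path_edges (x#xs@[x])"
proof -
  let ?ys = "x#xs@[x]"
  have "path_edges ?ys = mset (map (\<lambda>i. {?ys!i, ?ys!(i+1)}) [0..<length xs + 1])"
    by (simp add: path_edges_nth)
  also have "map (\<lambda>i. {?ys!i, ?ys!(i+1)}) [0..<length xs + 1]
     = map (\<lambda>i. {(x#xs) ! i, (x#xs) ! ((i + 1) mod length (x#xs))}) [0..<length (x#xs)]"
  proof (rule map_cong)
    fix i assume "i \<in> set [0..<length (x#xs)]"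
    then have i: "i < length xs + 1" by auto
    have a: "?ys ! i = (x#xs) ! i" using i by (cases i) (auto simp: nth_append)
    have b: "?ys ! (i+1) = (x#xs) ! ((i + 1) mod length (x#xs))"
    proof (cases "i = length xs")
      case True then show ?thesis by (simp add: nth_append)
    next
      case False then have "i + 1 < length (x#xs)" using i by simp
      then show ?thesis by (auto simp: nth_append)
    qed
    show "{?ys!i, ?ys!(i+1)} = {(x#xs) ! i, (x#xs) ! ((i + 1) mod length (x#xs))}"
      using a b by simp
  qed simp
  finally show ?thesis by (simp add: cycle_edges_def)
qed

lemma path_edges_Cons_Cons: "path_edges (a # b # rest) = add_mset {a,b} (path_edges (b # rest))" by simp

lemma path_edges_append: "path_edges (xs @ y # ys) = path_edges (xs @ [y]) + path_edges (y # ys)"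
proof (induction xs)
  case Nil then show ?case by simp
next
  case (Cons x xs) then show ?case by (cases xs) auto
qed

lemma path_edges_snoc: "path_edges (ys @ [a]) = (if ys = [] then {#} else add_mset {last ys, a} (path_edges ys))"
proof (induction ys rule: path_edges.induct)
  case (1 a b rest) then show ?case by auto
qed auto

lemma path_edges_map: "path_edges (map f xs) = image_mset (image f) (path_edges xs)"
  by (induction xs rule: path_edges.induct) auto

lemma path_edges_rev: "path_edges (rev xs) = path_edges xs"
proof (induction xs rule: path_edges.induct)
  case (1 a b rest)
  have "rev (a # b # rest) = rev (b # rest) @ [a]" by simp
  then have "path_edges (rev (a # b # rest)) = add_mset {last (rev (b#rest)), a} (path_edges (rev (b # rest)))"
    by (simp only: path_edges_snoc) simp
  also have "last (rev (b#rest)) = b" by simp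
  finally show ?case using 1 by (simp add: insert_commute)
qed auto

lemma cycle_edges_rotate1: "cycle_edges (rotate1 xs) = cycle_edges xs"
proof (cases xs)
  case Nil then show ?thesis by simp
next
  case (Cons x ys)
  show ?thesis
  proof (cases ys)
    case Nil then show ?thesis using Cons by simp
  next
    case (Cons y zs)
    have "cycle_edges (rotate1 xs) = cycle_edges (y # zs @ [x])" using Cons \<open>xs = x # ys\<close> by simp
    also have "\<dots> = path_edges ((y # zs @ [x]) @ [y])" by (simp add: cycle_edges_Cons)
    also have "\<dots> = path_edges (y # zs @ [x]) + path_edges [x, y]"
      using path_edges_append[of "y # zs" x "[y]"] by simp
    also have "\<dots> = path_edges (x # y # zs @ [x])"
      using path_edges_append[of "[x,y] @ zs" x "[]"] path_edges_append[of "[x]" y "zs @ [x]"]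
      by (simp add: insert_commute)
    also have "\<dots> = cycle_edges xs" using Cons \<open>xs = x # ys\<close> by (simp add: cycle_edges_Cons)
    finally show ?thesis .
  qed
qed

lemma cycle_edges_rotate: "cycle_edges (rotate k xs) = cycle_edges xs"
  by (induction k) (simp_all add: rotate_Suc cycle_edges_rotate1 del: rotate1.simps)

lemma cycle_edges_map: "cycle_edges (map f xs) = image_mset (image f) (cycle_edges xs)"
proof (cases xs)
  case Nil then show ?thesis by (simp add: cycle_edges_def)
next
  case (Cons a list)
  have "map f (a#list@[a]) = f a # map f list @ [f a]" by simp
  then show ?thesis using Cons path_edges_map[of f "a#list@[a]"] by (simp add: cycle_edges_Cons)
qed

lemma cycle_edges_rev: "cycle_edges (x # rev xs) = cycle_edges (x # xs)"
proof -
  have "x # rev xs @ [x] = rev (x # xs @ [x])" by simp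
  then have "cycle_edges (x # rev xs) = path_edges (rev (x # xs @ [x]))" by (simp add: cycle_edges_Cons)
  also have "\<dots> = path_edges (x # xs @ [x])" by (rule path_edges_rev)
  finally show ?thesis by (simp add: cycle_edges_Cons)
qed

lemma rotate_to:
  assumes "v \<in> set vs"
  obtains A where "cycle_edges vs = cycle_edges (v # A)" "mset (v # A) = mset vs"
proof -
  obtain xs ys where vs: "vs = xs @ v # ys" using assms split_list by metis
  have "rotate (length xs) vs = v # ys @ xs" using vs rotate_append[of xs "v # ys"] by simp
  then have "cycle_edges vs = cycle_edges (v # ys @ xs)" by (metis cycle_edges_rotate)
  moreover have "mset (v # ys @ xs) = mset vs" using vs by simp
  ultimately show ?thesis using that by blast
qed


lemma count_path_notin: "v \<notin> set xs \<Longrightarrow> count (path_edges xs) {v,z} = 0"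
  by (induction xs rule: path_edges.induct) (auto simp: doubleton_eq_iff)

lemma count_path_head:
  assumes "v \<notin> set xs" "z \<noteq> v"
  shows "count (path_edges (v # xs)) {v,z} = (if xs \<noteq> [] \<and> hd xs = z then 1 else 0)"
proof (cases xs)
  case Nil then show ?thesis by simp
next
  case (Cons y ys)
  have "count (path_edges xs) {v,z} = 0" by (rule count_path_notin[OF assms(1)])
  then show ?thesis using Cons assms by (auto simp: doubleton_eq_iff)
qed

lemma count_path_last:
  assumes "v \<notin> set xs" "z \<noteq> v"
  shows "count (path_edges (xs @ [v])) {v,z} = (if xs \<noteq> [] \<and> last xs = z then 1 else 0)"
proof -
  have "count (path_edges xs) {v,z} = 0" using assms count_path_notin by blast
  then show ?thesis using assms by (auto simp: path_edges_snoc doubleton_eq_iff)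
qed

lemma count_cycle_head:
  assumes "v \<notin> set A" "A \<noteq> []" "z \<noteq> v"
  shows "count (cycle_edges (v # A)) {v,z} = (if hd A = z then 1 else 0) + (if last A = z then 1 else 0)"
proof -
  obtain b B where A: "A = b # B" using assms(2) by (cases A) auto
  have "cycle_edges (v # A) = add_mset {v,b} (path_edges (A @ [v]))"
    using A by (simp add: cycle_edges_Cons)
  moreover have "count (path_edges (A @ [v])) {v,z} = (if last A = z then 1 else 0)"
    using count_path_last[OF assms(1,3)] assms(2) by simp
  ultimately show ?thesis using A assms by (auto simp: doubleton_eq_iff)
qed

lemma count_cycle_notin: assumes "v \<notin> set A" shows "count (cycle_edges A) {v,z} = 0"
proof (cases A)
  case Nil then show ?thesis by (simp add: cycle_edges_def)
next
  case (Cons b B) then show ?thesis using count_path_notin[of v "b # B @ [b]"] assms by (simp add: cycle_edges_Cons)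
qed

definition swp :: "nat \<Rightarrow> nat \<Rightarrow> nat \<Rightarrow> nat" where
  "swp a b x = (if x = a then b else if x = b then a else x)"

lemma swp_swp[simp]: "swp a b (swp a b x) = x" by (simp add: swp_def)
lemma swp_a[simp]: "swp a b a = b" by (simp add: swp_def)
lemma swp_b[simp]: "swp a b b = a" by (simp add: swp_def)
lemma swp_other[simp]: "x \<noteq> a \<Longrightarrow> x \<noteq> b \<Longrightarrow> swp a b x = x" by (simp add: swp_def)
lemma inj_swp: "inj (swp a b)" by (metis injI swp_swp)
lemma image_swp_swp[simp]: "swp a b ` (swp a b ` e) = e" by (simp add: image_image)

definition piE :: "nat \<Rightarrow> nat \<Rightarrow> mgraph \<Rightarrow> mgraph" where
  "piE a b X = image_mset (image (swp a b)) X"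

definition ind :: "nat \<Rightarrow> nat \<Rightarrow> int" where "ind z = (\<lambda>x. of_bool (x = z))"

definition hv :: "nat \<Rightarrow> nat \<Rightarrow> mgraph \<Rightarrow> nat \<Rightarrow> int" where
  "hv a b X z = (if z \<noteq> a \<and> z \<noteq> b then int (count X {a,z}) - int (count X {b,z}) else 0)"

definition dlt :: "nat \<Rightarrow> nat \<Rightarrow> nat \<Rightarrow> (nat \<Rightarrow> int) \<Rightarrow> nat set \<Rightarrow> int" where
  "dlt n a b h e = (\<Sum>z\<in>{0..<n} - {a,b}. h z * (of_bool (e = {b,z}) - of_bool (e = {a,z})))"

lemma hv_add: "hv a b (X + Y) = hv a b X + hv a b Y"
  by (rule ext) (simp add: hv_def)

lemma hv_empty[simp]: "hv a b {#} = 0"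
  by (rule ext) (simp add: hv_def)

lemma hv_sum_list: "hv a b (sum_list Xs) = sum_list (map (hv a b) Xs)"
  by (induction Xs) (simp_all add: hv_add)

lemma dlt_add: "dlt n a b (h1 + h2) e = dlt n a b h1 e + dlt n a b h2 e"
  unfolding dlt_def sum.distrib[symmetric] by (rule sum.cong) (simp_all add: algebra_simps)

lemma dlt_add_fun: "dlt n a b (\<lambda>x. h1 x + h2 x) e = dlt n a b h1 e + dlt n a b h2 e"
  using dlt_add[of n a b h1 h2 e] by (simp add: plus_fun_def)

lemma dlt_zero[simp]: "dlt n a b 0 e = 0"
  by (simp add: dlt_def)

lemma dlt_zero_fun[simp]: "dlt n a b (\<lambda>x. 0) e = 0"
  by (simp add: dlt_def)

lemma dlt_sum_list: "dlt n a b (sum_list hs) e = (\<Sum>h\<leftarrow>hs. dlt n a b h e)"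
proof (induction hs)
  case Nil then show ?case by simp
next
  case (Cons h hs) then show ?case by (simp add: dlt_add_fun)
qed

lemma dlt_uminus: "dlt n a b (- h) e = - dlt n a b h e"
  unfolding dlt_def sum_negf[symmetric] by (rule sum.cong) simp_all

lemma dlt_ind:
  assumes "z \<in> {0..<n} - {a,b}"
  shows "dlt n a b (ind z) e = of_bool (e = {b,z}) - of_bool (e = {a,z})"
proof -
  have "dlt n a b (ind z) e = (\<Sum>z'\<in>{0..<n} - {a,b}. if z' = z then of_bool (e = {b,z}) - of_bool (e = {a,z}) else 0)"
    unfolding dlt_def ind_def by (rule sum.cong) auto
  also have "\<dots> = of_bool (e = {b,z}) - of_bool (e = {a,z})" using assms by (simp add: sum.delta')
  finally show ?thesis .
qed

lemma dlt_a: assumes "z \<in> {0..<n} - {a,b}" "a \<noteq> b" shows "dlt n a b h {a,z} = - h z"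
proof -
  have "dlt n a b h {a,z} = (\<Sum>z'\<in>{0..<n} - {a,b}. if z' = z then - h z else 0)"
    unfolding dlt_def
    by (rule sum.cong) (use assms in \<open>auto simp: doubleton_eq_iff\<close>)
  then show ?thesis using assms by simp
qed

lemma dlt_b: assumes "z \<in> {0..<n} - {a,b}" "a \<noteq> b" shows "dlt n a b h {b,z} = h z"
proof -
  have "dlt n a b h {b,z} = (\<Sum>z'\<in>{0..<n} - {a,b}. if z' = z then h z else 0)"
    unfolding dlt_def
    by (rule sum.cong) (use assms in \<open>auto simp: doubleton_eq_iff\<close>)
  then show ?thesis using assms by simp
qed

lemma dlt_other: assumes "\<forall>z\<in>{0..<n} - {a,b}. e \<noteq> {a,z} \<and> e \<noteq> {b,z}" shows "dlt n a b h e = 0"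
  unfolding dlt_def using assms by (intro sum.neutral) auto

lemma count_image_invol:
  assumes "\<And>x. g (g x) = x"
  shows "count (image_mset g X) e = count X (g e)"
  by (induction X) (use assms in auto)

lemma count_complete:
  "count (complete_multigraph lam n) e = (if \<exists>i j. i < n \<and> j < n \<and> i \<noteq> j \<and> e = {i,j} then lam else 0)"
proof -
  let ?S = "{e. \<exists>i j. i < n \<and> j < n \<and> i \<noteq> j \<and> e = {i, j}}"
  have fin: "finite ?S"
  proof (rule finite_subset)
    show "?S \<subseteq> Pow {0..<n}" by auto
  qed simp
  have "count (complete_multigraph lam n) e = (\<Sum>e'\<in>?S. count (replicate_mset lam e') e)"
    unfolding complete_multigraph_def by (simp add: count_sum)
  also have "\<dots> = (\<Sum>e'\<in>?S. if e' = e then lam else 0)"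
    by (rule sum.cong) auto
  also have "\<dots> = (if e \<in> ?S then lam else 0)"
    using fin by (simp add: sum.delta')
  finally show ?thesis by simp
qed

lemma pair_ab:
  fixes i j n a b :: nat
  assumes "i \<noteq> j" "i < n" "j < n" "a \<noteq> b" "a = i \<or> a = j \<or> b = i \<or> b = j"
    and "\<forall>z\<in>{0..<n} - {a,b}. {i,j} \<noteq> {a,z} \<and> {i,j} \<noteq> {b,z}"
  shows "{i,j} = {a,b}"
proof -
  have c: "{i,j} = {j,i}" by blast
  { assume "a = i"
    then have ?thesis
    proof (cases "j = b")
      case False then have "j \<in> {0..<n} - {a,b}" using assms \<open>a = i\<close> by simp
      then show ?thesis using assms(6) \<open>a = i\<close> by blast
    qed simp }
  moreover
  { assume "a = j"
    then have ?thesis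
    proof (cases "i = b")
      case False then have "i \<in> {0..<n} - {a,b}" using assms \<open>a = j\<close> by simp
      then show ?thesis using assms(6) \<open>a = j\<close> c by blast
    qed (use c in simp) }
  moreover
  { assume "b = i"
    then have ?thesis
    proof (cases "j = a")
      case False then have "j \<in> {0..<n} - {a,b}" using assms \<open>b = i\<close> by simp
      then show ?thesis using assms(6) \<open>b = i\<close> by blast
    qed (use c in simp) }
  moreover
  { assume "b = j"
    then have ?thesis
    proof (cases "i = a")
      case False then have "i \<in> {0..<n} - {a,b}" using assms \<open>b = j\<close> by simp
      then show ?thesis using assms(6) \<open>b = j\<close> c by blast
    qed simp }
  ultimately show ?thesis using assms(5) by blast
qed

lemma swp_image_fix: "a \<notin> e \<Longrightarrow> b \<notin> e \<Longrightarrow> swp a b ` e = e"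
proof -
  assume "a \<notin> e" "b \<notin> e"
  then have "\<forall>x\<in>e. swp a b x = x" by (metis swp_other)
  then show ?thesis by simp
qed

lemma swp_image_ab: "swp a b ` {a,b} = {a,b}" by (simp add: insert_commute)

lemma swp_image_az: "z \<noteq> a \<Longrightarrow> z \<noteq> b \<Longrightarrow> swp a b ` {a,z} = {b,z}" by simp
lemma swp_image_bz: "z \<noteq> a \<Longrightarrow> z \<noteq> b \<Longrightarrow> swp a b ` {b,z} = {a,z}" by simp


lemma piE_count:
  assumes ab: "a \<noteq> b" "a < n" "b < n"
    and X: "\<forall>e\<in>#X. \<exists>i j. i < n \<and> j < n \<and> i \<noteq> j \<and> e = {i,j}"
  shows "int (count (piE a b X) e) = int (count X e) + dlt n a b (hv a b X) e"
proof -
  let ?g = "image (swp a b)"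
  have c: "count (piE a b X) e = count X (?g e)"
    unfolding piE_def by (rule count_image_invol) simp
  show ?thesis
  proof (cases "\<exists>z\<in>{0..<n} - {a,b}. e = {a,z}")
    case True
    then obtain z where z: "z \<in> {0..<n} - {a,b}" "e = {a,z}" by blast
    have "?g e = {b,z}" using z swp_image_az by simp
    then show ?thesis using z c dlt_a[OF z(1) ab(1)] by (simp add: hv_def)
  next
    case F1: False
    show ?thesis
    proof (cases "\<exists>z\<in>{0..<n} - {a,b}. e = {b,z}")
      case True
      then obtain z where z: "z \<in> {0..<n} - {a,b}" "e = {b,z}" by blast
      have "?g e = {a,z}" using z swp_image_bz by simp
      then show ?thesis using z c dlt_b[OF z(1) ab(1)] by (simp add: hv_def)
    next
      case F2: False
      have "\<forall>z\<in>{0..<n} - {a,b}. e \<noteq> {a,z} \<and> e \<noteq> {b,z}"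
      proof (intro ballI conjI notI)
        fix z assume "z \<in> {0..<n} - {a,b}"
        { assume "e = {a,z}"
          from this \<open>z \<in> {0..<n} - {a,b}\<close> have "\<exists>z\<in>{0..<n} - {a,b}. e = {a,z}" by (rule bexI)
          then show False using F1 by contradiction }
        { assume "e = {b,z}"
          from this \<open>z \<in> {0..<n} - {a,b}\<close> have "\<exists>z\<in>{0..<n} - {a,b}. e = {b,z}" by (rule bexI)
          then show False using F2 by contradiction }
      qed
      then have d0: "dlt n a b (hv a b X) e = 0" by (rule dlt_other)
      have fix_good: "?g e' = e'" if "e' \<in># X" "\<forall>z\<in>{0..<n} - {a,b}. e' \<noteq> {a,z} \<and> e' \<noteq> {b,z}" for e'
      proof -
        from bspec[OF X that(1)] obtain i j where ij: "i < n" "j < n" "i \<noteq> j" "e' = {i,j}"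
          by (elim exE conjE) simp
        show ?thesis
        proof (cases "a \<in> e' \<or> b \<in> e'")
          case False then show ?thesis using swp_image_fix by blast
        next
          case True
          then have "a = i \<or> a = j \<or> b = i \<or> b = j" using ij by auto
          then have "e' = {a,b}" using pair_ab[of i j n a b] that(2) ij ab by simp
          then show ?thesis using swp_image_ab by simp
        qed
      qed
      have "count X (?g e) = count X e"
      proof (cases "e \<in># X")
        case True then show ?thesis using fix_good F1 F2 by auto
      next
        case eX: False
        show ?thesis
        proof (cases "?g e \<in># X")
          case True
          have "\<forall>z\<in>{0..<n} - {a,b}. ?g e \<noteq> {a,z} \<and> ?g e \<noteq> {b,z}"
          proof (intro ballI conjI notI)
            fix z assume z: "z \<in> {0..<n} - {a,b}"
            { assume "?g e = {a,z}"
              then have "?g (?g e) = {b,z}" using z swp_image_az by simp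
              then show False using F2 z by auto }
            { assume "?g e = {b,z}"
              then have "?g (?g e) = {a,z}" using z swp_image_bz by simp
              then show False using F1 z by auto }
          qed
          then have "?g (?g e) = ?g e" using fix_good True by blast
          then have "?g e = e" by simp
          then show ?thesis by simp
        next
          case False then show ?thesis using eX by (simp add: not_in_iff)
        qed
      qed
      then show ?thesis using c d0 by simp
    qed
  qed
qed


definition twohalf :: "(nat \<Rightarrow> int) \<Rightarrow> bool" where
  "twohalf v \<longleftrightarrow> (\<exists>z w s t. (s = 1 \<or> s = -1) \<and> (t = 1 \<or> t = -1) \<and> v = (\<lambda>x. s * ind z x + t * ind w x))"

definition fsum :: "(nat \<Rightarrow> int) multiset \<Rightarrow> nat \<Rightarrow> int" where
  "fsum V x = (\<Sum>v\<in>#V. v x)"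

lemma fsum_add: "fsum (A + B) x = fsum A x + fsum B x" by (simp add: fsum_def)
lemma fsum_single: "fsum {#v#} x = v x" by (simp add: fsum_def)
lemma fsum_add_mset: "fsum (add_mset v A) x = v x + fsum A x" by (simp add: fsum_def)

lemma sign_cases: "(s::int) = 1 \<or> s = -1 \<Longrightarrow> (s = 1 \<Longrightarrow> P) \<Longrightarrow> (s = -1 \<Longrightarrow> P) \<Longrightarrow> P" by blast

lemma twohalf_extract:
  assumes "twohalf v" "s = 1 \<or> s = -1" "s * v z > 0"
  shows "\<exists>w t. (t = 1 \<or> t = -1) \<and> v = (\<lambda>x. s * ind z x + t * ind w x)"
proof -
  obtain z' w' s1 t1 where r: "s1 = 1 \<or> s1 = -1" "t1 = 1 \<or> t1 = -1" "v = (\<lambda>x. s1 * ind z' x + t1 * ind w' x)"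
    using assms(1) unfolding twohalf_def by blast
  show ?thesis
  proof (cases "z' = z \<and> s1 = s")
    case True then show ?thesis using r by blast
  next
    case F1: False
    show ?thesis
    proof (cases "w' = z \<and> t1 = s")
      case True
      then have "v = (\<lambda>x. s * ind z x + s1 * ind z' x)" using r(3) by (auto simp: algebra_simps)
      then show ?thesis using r(1) by blast
    next
      case F2: False
      have "s * v z \<le> 0"
        using F1 F2 r assms(2) unfolding ind_def by (auto elim!: sign_cases)
      then show ?thesis using assms(3) by simp
    qed
  qed
qed

lemma twohalf_merge:
  assumes "s = 1 \<or> s = -1" "t = 1 \<or> t = -1"
  shows "twohalf (\<lambda>x. s * ind w x + t * ind u x)"
  using assms unfolding twohalf_def by blast

lemma sub_add_mset_notin: assumes "A \<subseteq># add_mset x B" "x \<notin># A" shows "A \<subseteq># B"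
  unfolding subseteq_mset_def
proof (intro allI)
  fix y
  show "count A y \<le> count B y"
  proof (cases "y = x")
    case True then show ?thesis using assms(2) by (simp add: not_in_iff)
  next
    case False then show ?thesis using assms(1)[unfolded subseteq_mset_def, rule_format, of y] by simp
  qed
qed

lemma comb_lemma:
  assumes "\<forall>v\<in>#V. twohalf v" "s = 1 \<or> s = -1" "s * fsum V z0 > 0"
  shows "\<exists>W z1 s1. W \<subseteq># V \<and> (s1 = 1 \<or> s1 = -1) \<and> (\<forall>x. fsum W x = s * ind z0 x + s1 * ind z1 x)
           \<and> s1 * fsum V z1 > 0 \<and> (z1 = z0 \<longrightarrow> s1 = s \<and> s * fsum V z0 \<ge> 2)"
  using assms
proof (induction "size V" arbitrary: V rule: less_induct)
  case less
  show ?case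
  proof (cases "\<exists>v1\<in>#V. \<exists>v2\<in>#V - {#v1#}. \<exists>z. v1 z > 0 \<and> v2 z < 0")
    case True
    then obtain v1 v2 z where v: "v1 \<in># V" "v2 \<in># V - {#v1#}" "v1 z > 0" "v2 z < 0" by blast
    obtain w t where w: "t = 1 \<or> t = -1" "v1 = (\<lambda>x. 1 * ind z x + t * ind w x)"
      using twohalf_extract[of v1 1 z] v less.prems(1) by auto
    have v2V: "v2 \<in># V" using v(2) by (meson in_diffD)
    obtain u r where u: "r = 1 \<or> r = -1" "v2 = (\<lambda>x. (-1) * ind z x + r * ind u x)"
      using twohalf_extract[of v2 "-1" z] v(4) v2V less.prems(1) by auto
    define m where "m = (\<lambda>x. t * ind w x + r * ind u x)"
    have m: "\<forall>x. m x = v1 x + v2 x" using w u by (simp add: m_def)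
    define V' where "V' = add_mset m (V - {#v1, v2#})"
    have sub: "{#v1, v2#} \<subseteq># V"
      using v(1) v(2) by (simp add: insert_subset_eq_iff)
    have eqV: "V = (V - {#v1, v2#}) + {#v1, v2#}" by (rule subset_mset.diff_add[OF sub, symmetric])
    have sizeV': "size V' < size V"
    proof -
      have "size (V - {#v1, v2#}) = size V - 2" using sub by (simp add: size_Diff_submset)
      moreover have "size V \<ge> 2" using size_mset_mono[OF sub] by simp
      ultimately show ?thesis by (simp add: V'_def)
    qed
    have fsumV': "fsum V' x = fsum V x" for x
    proof -
      from eqV have "fsum V x = fsum ((V - {#v1, v2#}) + {#v1, v2#}) x" by (rule arg_cong)
      also have "\<dots> = fsum (V - {#v1, v2#}) x + v1 x + v2 x" by (simp add: fsum_def)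
      finally show ?thesis using m by (simp add: V'_def fsum_add_mset)
    qed
    have th: "\<forall>v\<in>#V'. twohalf v"
      using less.prems(1) twohalf_merge[OF w(1) u(1)] unfolding V'_def m_def by (auto dest: in_diffD)
    have "s * fsum V' z0 > 0" using fsumV' less.prems(3) by simp
    from less.hyps[OF sizeV' th less.prems(2) this]
    obtain W' z1 s1 where W': "W' \<subseteq># V'" "s1 = 1 \<or> s1 = -1" "\<forall>x. fsum W' x = s * ind z0 x + s1 * ind z1 x"
      "s1 * fsum V' z1 > 0" "z1 = z0 \<longrightarrow> s1 = s \<and> s * fsum V' z0 \<ge> 2"
      by blast
    have W'': "s1 * fsum V z1 > 0" "z1 = z0 \<longrightarrow> s1 = s \<and> s * fsum V z0 \<ge> 2" using W'(4,5) fsumV' by simp_all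
    show ?thesis
    proof (cases "m \<in># W'")
      case True
      define W where "W = (W' - {#m#}) + {#v1, v2#}"
      have "W' - {#m#} \<subseteq># V - {#v1, v2#}" using W'(1) unfolding V'_def
        by (simp add: subset_eq_diff_conv)
      then have "W \<subseteq># (V - {#v1, v2#}) + {#v1, v2#}" unfolding W_def
        by (rule subset_mset.add_right_mono)
      then have WV: "W \<subseteq># V" using eqV by simp
      have fW: "fsum W x = s * ind z0 x + s1 * ind z1 x" for x
      proof -
        have "fsum W' x = fsum (add_mset m (W' - {#m#})) x" using True by (simp add: insert_DiffM)
        then have "fsum W' x = fsum (W' - {#m#}) x + m x" by (simp add: fsum_add_mset)
        then have "fsum W x = fsum W' x" using m by (simp add: W_def fsum_add fsum_add_mset fsum_single)
        then show ?thesis using W'(3) by simp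
      qed
      show ?thesis
        by (rule exI[of _ W], rule exI[of _ z1], rule exI[of _ s1]) (use WV fW W'(2) W'' in simp)
    next
      case False
      have "W' \<subseteq># V - {#v1, v2#}" using W'(1) False unfolding V'_def by (rule sub_add_mset_notin)
      then have WV: "W' \<subseteq># V" by (meson subset_mset.order_trans diff_subset_eq_self)
      show ?thesis
        by (rule exI[of _ W'], rule exI[of _ z1], rule exI[of _ s1]) (use WV W'(2,3) W'' in simp)
    qed
  next
    case False
    then have nc: "\<And>v1 v2 z. v1 \<in># V \<Longrightarrow> v2 \<in># V - {#v1#} \<Longrightarrow> v1 z > 0 \<Longrightarrow> v2 z < 0 \<Longrightarrow> False" by blast
    have "\<exists>v\<in>#V. s * v z0 > 0"
    proof (rule ccontr)
      assume "\<not> ?thesis"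
      then have "\<forall>v\<in>#V. s * v z0 \<le> 0" by auto
      then have "(\<Sum>v\<in>#V. s * v z0) \<le> 0" by (induction V) auto
      then show False using less.prems(3) by (simp add: fsum_def sum_mset_distrib_left)
    qed
    then obtain v where v: "v \<in># V" "s * v z0 > 0" by blast
    obtain z1 t where zt: "t = 1 \<or> t = -1" "v = (\<lambda>x. s * ind z0 x + t * ind z1 x)"
      using twohalf_extract[of v s z0] less.prems(1,2) v by blast
    define V0 where "V0 = V - {#v#}"
    have VV0: "V = add_mset v V0" using v(1) by (simp add: V0_def)
    have tv: "t * v z1 > 0"
      using zt less.prems(2) v(2) unfolding ind_def by (auto elim!: sign_cases split: if_splits)
    have others: "t * u z1 \<ge> 0" if "u \<in># V0" for u
    proof (rule ccontr)
      assume "\<not> t * u z1 \<ge> 0"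
      then have ut: "t * u z1 < 0" by simp
      show False
      proof (rule sign_cases[OF zt(1)])
        assume "t = 1"
        then show False using nc[of v u z1] tv ut that v(1) by (simp add: V0_def)
      next
        assume "t = -1"
        have "u \<in># V" using that by (simp add: V0_def) (meson in_diffD)
        moreover have "v \<in># V - {#u#}"
        proof -
          have "V - {#u#} = add_mset v (V0 - {#u#})" using VV0 that by (simp add: diff_add_mset_swap insert_DiffM2)
          then show ?thesis by simp
        qed
        ultimately show False using nc[of u v z1] tv ut \<open>t = -1\<close> by simp
      qed
    qed
    have sum0: "t * fsum V0 z1 \<ge> 0"
      using others unfolding fsum_def by (induction V0) (auto simp: sum_mset_distrib_left algebra_simps)
    have fV: "fsum V x = v x + fsum V0 x" for x using VV0 by (simp add: fsum_add_mset)
    have "t * fsum V z1 > 0" using fV[of z1] sum0 tv by (simp add: algebra_simps)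
    moreover have "z1 = z0 \<longrightarrow> t = s \<and> s * fsum V z0 \<ge> 2"
    proof
      assume "z1 = z0"
      have "s * v z0 > 0" by fact
      then have "t = s" using zt \<open>z1 = z0\<close> less.prems(2) unfolding ind_def by (auto elim!: sign_cases)
      moreover have "s * v z0 = 2" using zt \<open>z1 = z0\<close> \<open>t = s\<close> less.prems(2) unfolding ind_def by (auto elim!: sign_cases)
      ultimately show "t = s \<and> s * fsum V z0 \<ge> 2" using fV[of z0] sum0 \<open>z1 = z0\<close> by (simp add: algebra_simps)
    qed
    moreover have "{#v#} \<subseteq># V" using v(1) by simp
    moreover have "\<forall>x. fsum {#v#} x = s * ind z0 x + t * ind z1 x" using zt by (simp add: fsum_single)
    ultimately show ?thesis using zt(1) by blast
  qed
qed


definition sel :: "nat \<Rightarrow> nat \<Rightarrow> (nat \<Rightarrow> bool) \<Rightarrow> mgraph list \<Rightarrow> mgraph" where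
  "sel a b F Ps = (\<Sum>i\<leftarrow>[0..<length Ps]. if F i then piE a b (Ps!i) else Ps!i)"

lemma twohalfI:
  assumes "s = 1 \<or> s = -1" "t = 1 \<or> t = -1" "v = (\<lambda>x. s * ind z x + t * ind w x)"
  shows "twohalf v"
  unfolding twohalf_def using assms by (intro exI[of _ z] exI[of _ w] exI[of _ s] exI[of _ t]) simp

lemma twohalf_zero: "twohalf (\<lambda>x. 0)"
  by (rule twohalfI[of 1 "-1" _ 0 0]) (simp_all add: ind_def)

lemma twohalf_zero': "twohalf 0"
  using twohalf_zero by (simp add: zero_fun_def)

lemma map_swp_fix: "a \<notin> set xs \<Longrightarrow> b \<notin> set xs \<Longrightarrow> map (swp a b) xs = xs"
  by (induction xs) auto

lemma piE_cycle: "piE a b (cycle_edges vs) = cycle_edges (map (swp a b) vs)"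
  by (simp add: piE_def cycle_edges_map)

lemma piE_path: "piE a b (path_edges vs) = path_edges (map (swp a b) vs)"
  by (simp add: piE_def path_edges_map)

lemma sel_single: "sel a b F [X] = (if F 0 then piE a b X else X)"
  by (simp add: sel_def)

lemma sel_two: "sel a b F [X, Y] = (if F 0 then piE a b X else X) + (if F 1 then piE a b Y else Y)"
  by (simp add: sel_def)

lemma hv_eqI: assumes "\<And>z. z \<noteq> a \<Longrightarrow> z \<noteq> b \<Longrightarrow> int (count X {a,z}) - int (count X {b,z}) = h z"
  "h a = 0" "h b = 0"
  shows "hv a b X = h"
  using assms by (auto simp: hv_def)

lemma single_piece:
  assumes "distinct vs" "length vs \<ge> 2" "a \<noteq> b" "twohalf (hv a b (cycle_edges vs))"
  shows "\<exists>Ps. cycle_edges vs = sum_list Ps \<and> (\<forall>X\<in>set Ps. twohalf (hv a b X)) \<and>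
     (\<forall>F. \<exists>vs'. length vs' = length vs \<and> distinct vs' \<and> cycle_edges vs' = sel a b F Ps)"
proof (rule exI[of _ "[cycle_edges vs]"], intro conjI allI)
  fix F
  show "\<exists>vs'. length vs' = length vs \<and> distinct vs' \<and> cycle_edges vs' = sel a b F [cycle_edges vs]"
  proof (cases "F 0")
    case True
    have "inj_on (swp a b) (set vs)" using inj_swp by (rule inj_on_subset) simp
    then have "distinct (map (swp a b) vs)" using assms(1) by (simp add: distinct_map)
    then show ?thesis using True by (intro exI[of _ "map (swp a b) vs"]) (simp add: sel_single piE_cycle)
  next
    case False then show ?thesis using assms(1) by (intro exI[of _ vs]) (simp add: sel_single)
  qed
qed (use assms in auto)

lemma cycle_piece:
  assumes "distinct vs" "length vs \<ge> 2" "a \<noteq> b"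
  shows "\<exists>Ps. cycle_edges vs = sum_list Ps \<and> (\<forall>X\<in>set Ps. twohalf (hv a b X)) \<and>
     (\<forall>F. \<exists>vs'. length vs' = length vs \<and> distinct vs' \<and> cycle_edges vs' = sel a b F Ps)"
proof (cases "a \<in> set vs")
  case aT: True
  obtain A where A: "cycle_edges vs = cycle_edges (a # A)" "mset (a # A) = mset vs"
    using rotate_to[OF aT] by blast
  have dA: "distinct (a # A)" using mset_eq_imp_distinct_iff[OF A(2)] assms(1) by simp
  have sA: "set (a # A) = set vs" by (rule mset_eq_setD[OF A(2)])
  have lA: "length (a # A) = length vs" by (rule mset_eq_length[OF A(2)])
  have Ane: "A \<noteq> []" using lA assms(2) by auto
  show ?thesis
  proof (cases "b \<in> set vs")
    case bF: False
    have "twohalf (hv a b (cycle_edges vs))"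
    proof -
      have "hv a b (cycle_edges vs) = (\<lambda>x. 1 * ind (hd A) x + 1 * ind (last A) x)"
      proof (rule hv_eqI)
        fix z assume z: "z \<noteq> a" "z \<noteq> b"
        have "count (cycle_edges vs) {b,z} = 0" using count_cycle_notin[OF bF] .
        moreover have "count (cycle_edges vs) {a,z} = (if hd A = z then 1 else 0) + (if last A = z then 1 else 0)"
          using A(1) count_cycle_head[of a A z] dA Ane z by simp
        ultimately show "int (count (cycle_edges vs) {a,z}) - int (count (cycle_edges vs) {b,z}) = 1 * ind (hd A) z + 1 * ind (last A) z"
          by (auto simp: ind_def)
      next
        have "hd A \<noteq> a" "last A \<noteq> a" using dA Ane by auto
        then show "1 * ind (hd A) a + 1 * ind (last A) a = 0" by (simp add: ind_def)
      next
        have "hd A \<noteq> b" "last A \<noteq> b" using hd_in_set[OF Ane] last_in_set[OF Ane] set_subset_Cons[of A a] sA bF by blast+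
        then show "1 * ind (hd A) b + 1 * ind (last A) b = 0" by (simp add: ind_def)
      qed
      then show ?thesis by (rule twohalfI[rotated 2]) simp_all
    qed
    then show ?thesis using single_piece assms by blast
  next
    case bT: True
    then have "b \<in> set (a # A)" using sA by simp
    then have "b \<in> set A" using assms(3) by simp
    then obtain A1 A2 where A12: "A = A1 @ b # A2" by (meson split_list)
    let ?P1 = "path_edges (a # A1 @ [b])" and ?P2 = "path_edges (b # A2 @ [a])"
    have d: "distinct (a # A1 @ b # A2)" using dA A12 by simp
    have ce: "cycle_edges vs = ?P1 + ?P2"
      using A(1) A12 path_edges_append[of "a # A1" b "A2 @ [a]"] by (simp add: cycle_edges_Cons)
    have h1: "twohalf (hv a b ?P1)"
    proof (cases "A1 = []")
      case True
      have "hv a b ?P1 = (\<lambda>x. 0)" using True by (rule_tac hv_eqI) (simp_all add: doubleton_eq_iff)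
      then show ?thesis using twohalf_zero by simp
    next
      case False
      have "hv a b ?P1 = (\<lambda>x. 1 * ind (hd A1) x + (-1) * ind (last A1) x)"
      proof (rule hv_eqI)
        fix z assume z: "z \<noteq> a" "z \<noteq> b"
        have "count ?P1 {a,z} = (if hd A1 = z then 1 else 0)"
          using count_path_head[of a "A1 @ [b]" z] d z False by auto
        moreover have "count ?P1 {b,z} = (if last A1 = z then 1 else 0)"
          using count_path_last[of b "a # A1" z] d z False by auto
        ultimately show "int (count ?P1 {a,z}) - int (count ?P1 {b,z}) = 1 * ind (hd A1) z + (-1) * ind (last A1) z"
          by (simp add: ind_def)
      next
        have "hd A1 \<noteq> a" "last A1 \<noteq> a" using d False by auto
        then show "1 * ind (hd A1) a + (-1) * ind (last A1) a = 0" by (simp add: ind_def)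
      next
        have "hd A1 \<noteq> b" "last A1 \<noteq> b" using d False by auto
        then show "1 * ind (hd A1) b + (-1) * ind (last A1) b = 0" by (simp add: ind_def)
      qed
      then show ?thesis by (rule twohalfI[rotated 2]) simp_all
    qed
    have h2: "twohalf (hv a b ?P2)"
    proof (cases "A2 = []")
      case True
      have "hv a b ?P2 = (\<lambda>x. 0)" using True by (rule_tac hv_eqI) (simp_all add: doubleton_eq_iff)
      then show ?thesis using twohalf_zero by simp
    next
      case False
      have "hv a b ?P2 = (\<lambda>x. 1 * ind (last A2) x + (-1) * ind (hd A2) x)"
      proof (rule hv_eqI)
        fix z assume z: "z \<noteq> a" "z \<noteq> b"
        have "count ?P2 {b,z} = (if hd A2 = z then 1 else 0)"
          using count_path_head[of b "A2 @ [a]" z] d z False by auto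
        moreover have "count ?P2 {a,z} = (if last A2 = z then 1 else 0)"
          using count_path_last[of a "b # A2" z] d z False by auto
        ultimately show "int (count ?P2 {a,z}) - int (count ?P2 {b,z}) = 1 * ind (last A2) z + (-1) * ind (hd A2) z"
          by (simp add: ind_def)
      next
        have "hd A2 \<noteq> a" "last A2 \<noteq> a" using d False by auto
        then show "1 * ind (last A2) a + (-1) * ind (hd A2) a = 0" by (simp add: ind_def)
      next
        have "hd A2 \<noteq> b" "last A2 \<noteq> b" using d False by auto
        then show "1 * ind (last A2) b + (-1) * ind (hd A2) b = 0" by (simp add: ind_def)
      qed
      then show ?thesis by (rule twohalfI[rotated 2]) simp_all
    qed
    have sw1: "piE a b ?P1 = path_edges (a # rev A1 @ [b])"
    proof -
      have "map (swp a b) (a # A1 @ [b]) = b # A1 @ [a]" using d map_swp_fix[of a A1 b] by simp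
      then have "piE a b ?P1 = path_edges (b # A1 @ [a])" by (simp add: piE_path)
      also have "\<dots> = path_edges (rev (b # A1 @ [a]))" by (simp only: path_edges_rev)
      finally show ?thesis by simp
    qed
    have sw2: "piE a b ?P2 = path_edges (b # rev A2 @ [a])"
    proof -
      have "map (swp a b) (b # A2 @ [a]) = a # A2 @ [b]" using d map_swp_fix[of a A2 b] by simp
      then have "piE a b ?P2 = path_edges (a # A2 @ [b])" by (simp add: piE_path)
      also have "\<dots> = path_edges (rev (a # A2 @ [b]))" by (simp only: path_edges_rev)
      finally show ?thesis by simp
    qed
    show ?thesis
    proof (rule exI[of _ "[?P1, ?P2]"], intro conjI allI)
      fix F :: "nat \<Rightarrow> bool"
      define B1 where "B1 = (if F 0 then rev A1 else A1)"
      define B2 where "B2 = (if F 1 then rev A2 else A2)"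
      have e1: "path_edges (a # B1 @ [b]) = (if F 0 then piE a b ?P1 else ?P1)" using sw1 B1_def by simp
      have e2: "path_edges (b # B2 @ [a]) = (if F 1 then piE a b ?P2 else ?P2)" using sw2 B2_def by simp
      have "cycle_edges (a # B1 @ b # B2) = path_edges (a # B1 @ [b]) + path_edges (b # B2 @ [a])"
        using path_edges_append[of "a # B1" b "B2 @ [a]"] by (simp add: cycle_edges_Cons)
      then have c3: "cycle_edges (a # B1 @ b # B2) = sel a b F [?P1, ?P2]" using e1 e2 by (simp add: sel_two)
      have c1: "distinct (a # B1 @ b # B2)" using d by (simp add: B1_def B2_def)
      have c2: "length (a # B1 @ b # B2) = length vs" using lA A12 by (simp add: B1_def B2_def)
      show "\<exists>vs'. length vs' = length vs \<and> distinct vs' \<and> cycle_edges vs' = sel a b F [?P1, ?P2]"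
        using c1 c2 c3 by (intro exI[of _ "a # B1 @ b # B2"]) simp
    qed (use ce h1 h2 in simp_all)
  qed
next
  case aF: False
  show ?thesis
  proof (cases "b \<in> set vs")
    case bF: False
    have "hv a b (cycle_edges vs) = (\<lambda>x. 0)"
      by (rule hv_eqI) (simp_all add: count_cycle_notin aF bF)
    then show ?thesis using single_piece assms twohalf_zero by simp
  next
    case bT: True
    obtain A where A: "cycle_edges vs = cycle_edges (b # A)" "mset (b # A) = mset vs"
      using rotate_to[OF bT] by blast
    have dA: "distinct (b # A)" using mset_eq_imp_distinct_iff[OF A(2)] assms(1) by simp
    have sA: "set (b # A) = set vs" by (rule mset_eq_setD[OF A(2)])
    have lA: "length (b # A) = length vs" by (rule mset_eq_length[OF A(2)])
    have Ane: "A \<noteq> []" using lA assms(2) by auto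
    have "hv a b (cycle_edges vs) = (\<lambda>x. (-1) * ind (hd A) x + (-1) * ind (last A) x)"
    proof (rule hv_eqI)
      fix z assume z: "z \<noteq> a" "z \<noteq> b"
      have "count (cycle_edges vs) {a,z} = 0" using count_cycle_notin[OF aF] .
      moreover have "count (cycle_edges vs) {b,z} = (if hd A = z then 1 else 0) + (if last A = z then 1 else 0)"
        using A(1) count_cycle_head[of b A z] dA Ane z by simp
      ultimately show "int (count (cycle_edges vs) {a,z}) - int (count (cycle_edges vs) {b,z}) = (-1) * ind (hd A) z + (-1) * ind (last A) z"
        by (auto simp: ind_def)
    next
      have "hd A \<noteq> a" "last A \<noteq> a" using hd_in_set[OF Ane] last_in_set[OF Ane] set_subset_Cons[of A b] sA aF by blast+
      then show "(-1) * ind (hd A) a + (-1) * ind (last A) a = 0" by (simp add: ind_def)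
    next
      have "hd A \<noteq> b" "last A \<noteq> b" using dA Ane by auto
      then show "(-1) * ind (hd A) b + (-1) * ind (last A) b = 0" by (simp add: ind_def)
    qed
    then have "twohalf (hv a b (cycle_edges vs))" by (rule twohalfI[rotated 2]) simp_all
    then show ?thesis using single_piece assms by blast
  qed
qed


lemma sum_list_fun_apply: "(sum_list (fs :: ('a \<Rightarrow> int) list)) x = (\<Sum>f\<leftarrow>fs. f x)"
  by (induction fs) simp_all

lemma int_sum_list: "int (\<Sum>x\<leftarrow>xs. f x) = (\<Sum>x\<leftarrow>xs. int (f x))"
  by (induction xs) simp_all

lemma count_sum_list: "count (sum_list Ms) x = (\<Sum>M\<leftarrow>Ms. count M x)"
  by (induction Ms) simp_all

lemma sum_mset_fun_apply: "(sum_mset (W :: (nat \<Rightarrow> int) multiset)) x = fsum W x"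
  by (induction W) (simp_all add: fsum_def)

lemma lift_image_sub:
  assumes "W \<subseteq># image_mset f U"
  shows "\<exists>U'. U' \<subseteq># U \<and> image_mset f U' = W"
  using assms
proof (induction U arbitrary: W)
  case empty then show ?case by simp
next
  case (add x U)
  show ?case
  proof (cases "f x \<in># W")
    case True
    then have "W - {#f x#} \<subseteq># image_mset f U" using add.prems
      by (simp add: subset_eq_diff_conv)
    then obtain U0 where U0: "U0 \<subseteq># U" "image_mset f U0 = W - {#f x#}" using add.IH by blast
    have "add_mset x U0 \<subseteq># add_mset x U" using U0(1) by simp
    moreover have "image_mset f (add_mset x U0) = W" using U0(2) True by (simp add: insert_DiffM)
    ultimately show ?thesis by blast
  next
    case False
    then have "W \<subseteq># image_mset f U" using add.prems by (simp add: sub_add_mset_notin)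
    then obtain U0 where U0: "U0 \<subseteq># U" "image_mset f U0 = W" using add.IH by blast
    have "U \<subseteq># add_mset x U" by (simp add: subseteq_mset_def)
    then have "U0 \<subseteq># add_mset x U" using U0(1) by (meson subset_mset.order_trans)
    then show ?thesis using U0(2) by blast
  qed
qed

lemma sub_distinct_filter:
  assumes "distinct L" "U' \<subseteq># mset L"
  shows "U' = mset (filter (\<lambda>u. u \<in># U') L)"
proof (rule multiset_eqI)
  fix x
  have c1: "count (mset L) x \<le> 1" using assms(1) by (simp add: distinct_count_atmost_1)
  have c2: "count U' x \<le> count (mset L) x" using assms(2) by (simp add: subseteq_mset_def)
  show "count U' x = count (mset (filter (\<lambda>u. u \<in># U') L)) x"
  proof (cases "x \<in># U'")
    case True
    then have "count U' x \<ge> 1" by simp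
    moreover have "count (mset (filter (\<lambda>u. u \<in># U') L)) x = count (mset L) x" using True by simp
    ultimately show ?thesis using c1 c2 by linarith
  next
    case False then show ?thesis by (simp add: count_eq_zero_iff)
  qed
qed

lemma global_switch:
  fixes L :: "'u list" and pc :: "'u \<Rightarrow> mgraph"
  assumes L: "distinct L" and th: "\<forall>u\<in>set L. twohalf (hv a b (pc u))"
    and edg: "\<forall>u\<in>set L. \<forall>e\<in>#pc u. \<exists>i j. i < n \<and> j < n \<and> i \<noteq> j \<and> e = {i,j}"
    and ab: "a \<noteq> b" "a < n" "b < n"
    and s: "s = 1 \<or> s = -1" "s * hv a b (\<Sum>u\<leftarrow>L. pc u) z0 > 0"
  shows "\<exists>S z1 s1. (s1 = 1 \<or> s1 = -1) \<and> s1 * hv a b (\<Sum>u\<leftarrow>L. pc u) z1 > 0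
     \<and> (z1 = z0 \<longrightarrow> s1 = s \<and> s * hv a b (\<Sum>u\<leftarrow>L. pc u) z0 \<ge> 2)
     \<and> (\<forall>e. int (count (\<Sum>u\<leftarrow>L. if u \<in> S then piE a b (pc u) else pc u) e)
             = int (count (\<Sum>u\<leftarrow>L. pc u) e) + dlt n a b (\<lambda>x. s * ind z0 x + s1 * ind z1 x) e)"
proof -
  define V where "V = image_mset (\<lambda>u. hv a b (pc u)) (mset L)"
  have fV: "fsum V x = hv a b (\<Sum>u\<leftarrow>L. pc u) x" for x
  proof -
    have "hv a b (\<Sum>u\<leftarrow>L. pc u) = (\<Sum>u\<leftarrow>L. hv a b (pc u))"
      by (simp add: hv_sum_list comp_def)
    then have "hv a b (\<Sum>u\<leftarrow>L. pc u) x = (\<Sum>u\<leftarrow>L. hv a b (pc u) x)"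
      by (simp add: sum_list_fun_apply comp_def)
    moreover have "fsum V x = (\<Sum>u\<leftarrow>L. hv a b (pc u) x)"
      unfolding V_def fsum_def by (simp add: sum_mset_sum_list[symmetric] image_mset.compositionality comp_def)
    ultimately show ?thesis by simp
  qed
  have thV: "\<forall>v\<in>#V. twohalf v" using th by (auto simp: V_def)
  obtain W z1 s1 where W: "W \<subseteq># V" "s1 = 1 \<or> s1 = -1" "\<forall>x. fsum W x = s * ind z0 x + s1 * ind z1 x"
    "s1 * fsum V z1 > 0" "z1 = z0 \<longrightarrow> s1 = s \<and> s * fsum V z0 \<ge> 2"
    using comb_lemma[OF thV s(1)] s(2) fV by (metis (no_types, lifting))
  obtain U' where U': "U' \<subseteq># mset L" "image_mset (\<lambda>u. hv a b (pc u)) U' = W"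
    using lift_image_sub[of W "\<lambda>u. hv a b (pc u)" "mset L"] W(1) V_def by blast
  define S where "S = set_mset U'"
  have U'eq: "U' = mset (filter (\<lambda>u. u \<in> S) L)" using sub_distinct_filter[OF L U'(1)] by (simp add: S_def)
  have sumW: "(\<Sum>u\<leftarrow>filter (\<lambda>u. u \<in> S) L. hv a b (pc u)) = (\<lambda>x. s * ind z0 x + s1 * ind z1 x)"
  proof (rule ext)
    fix x
    have "(\<Sum>u\<leftarrow>filter (\<lambda>u. u \<in> S) L. hv a b (pc u)) = sum_mset W"
      using U'(2) U'eq by (metis (no_types, lifting) mset_map sum_mset_sum_list)
    then show "(\<Sum>u\<leftarrow>filter (\<lambda>u. u \<in> S) L. hv a b (pc u)) x = s * ind z0 x + s1 * ind z1 x"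
      using W(3) by (simp add: sum_mset_fun_apply)
  qed
  have cnt: "int (count (\<Sum>u\<leftarrow>L. if u \<in> S then piE a b (pc u) else pc u) e)
             = int (count (\<Sum>u\<leftarrow>L. pc u) e) + dlt n a b (\<lambda>x. s * ind z0 x + s1 * ind z1 x) e" for e
  proof -
    have step: "\<forall>u\<in>set L. int (count (if u \<in> S then piE a b (pc u) else pc u) e)
        = int (count (pc u) e) + (if u \<in> S then dlt n a b (hv a b (pc u)) e else 0)"
      using piE_count[OF ab] edg by simp
    have "int (count (\<Sum>u\<leftarrow>L. if u \<in> S then piE a b (pc u) else pc u) e)
        = (\<Sum>u\<leftarrow>L. int (count (if u \<in> S then piE a b (pc u) else pc u) e))"
      by (simp add: count_sum_list int_sum_list comp_def)
    also have "\<dots> = (\<Sum>u\<leftarrow>L. int (count (pc u) e) + (if u \<in> S then dlt n a b (hv a b (pc u)) e else 0))"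
      using step by (intro arg_cong[where f=sum_list] map_cong) auto
    also have "\<dots> = (\<Sum>u\<leftarrow>L. int (count (pc u) e)) + (\<Sum>u\<leftarrow>L. if u \<in> S then dlt n a b (hv a b (pc u)) e else 0)"
      by (simp add: sum_list_addf)
    also have "(\<Sum>u\<leftarrow>L. if u \<in> S then dlt n a b (hv a b (pc u)) e else 0) = (\<Sum>u\<leftarrow>filter (\<lambda>u. u \<in> S) L. dlt n a b (hv a b (pc u)) e)"
      by (induction L) auto
    also have "\<dots> = dlt n a b (\<Sum>u\<leftarrow>filter (\<lambda>u. u \<in> S) L. hv a b (pc u)) e"
      by (simp add: dlt_sum_list comp_def)
    also have "\<dots> = dlt n a b (\<lambda>x. s * ind z0 x + s1 * ind z1 x) e" using sumW by simp
    also have "(\<Sum>u\<leftarrow>L. int (count (pc u) e)) = int (count (\<Sum>u\<leftarrow>L. pc u) e)"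
      by (simp add: count_sum_list int_sum_list comp_def)
    finally show ?thesis .
  qed
  show ?thesis
    apply (rule exI[of _ S], rule exI[of _ z1], rule exI[of _ s1])
    using W(2,4,5) fV cnt by simp
qed


lemma pm_partner:
  assumes "perfect_matching V I" "v \<in> V"
  shows "\<exists>w. w \<noteq> v \<and> w \<in> V \<and> (\<forall>z. z \<noteq> v \<longrightarrow> count I {v,z} = (if z = w then 1 else 0))"
proof -
  have "degree I v = 1" using assms unfolding perfect_matching_def by blast
  then obtain e0 where e0: "filter_mset (\<lambda>e. v \<in> e) I = {#e0#}"
    unfolding degree_def using size_1_singleton_mset by blast
  then have "e0 \<in># filter_mset (\<lambda>e. v \<in> e) I" by simp
  then have e0I: "e0 \<in># I" "v \<in> e0" by simp_all
  then have "card e0 = 2" "e0 \<subseteq> V" using assms(1) unfolding perfect_matching_def by blast+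
  then obtain x y where xy: "e0 = {x,y}" "x \<noteq> y" by (meson card_2_iff)
  obtain w where w: "e0 = {v,w}" "w \<noteq> v"
  proof (cases "x = v")
    case True then show ?thesis using that xy by blast
  next
    case False then have "y = v" using e0I(2) xy by blast
    then show ?thesis using that xy by (metis insert_commute)
  qed
  have wV: "w \<in> V" using \<open>e0 \<subseteq> V\<close> w by blast
  have "count I {v,z} = (if z = w then 1 else 0)" if "z \<noteq> v" for z
  proof -
    have "count I {v,z} = count (filter_mset (\<lambda>e. v \<in> e) I) {v,z}" by simp
    also have "\<dots> = (if {v,w} = {v,z} then 1 else 0)" using e0 w by simp
    also have "({v,w} = {v,z}) = (z = w)" using that w(2) by (auto simp: doubleton_eq_iff)
    finally show ?thesis by simp
  qed
  then show ?thesis using w(2) wV by blast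
qed

lemma pm_twohalf:
  assumes "perfect_matching {0..<n} I" "a \<noteq> b" "a < n" "b < n"
  shows "twohalf (hv a b I)"
proof -
  obtain w where w: "w \<noteq> a" "w < n" "\<forall>z. z \<noteq> a \<longrightarrow> count I {a,z} = (if z = w then 1 else 0)"
    using pm_partner[OF assms(1), of a] assms(3) by auto
  obtain w' where w': "w' \<noteq> b" "w' < n" "\<forall>z. z \<noteq> b \<longrightarrow> count I {b,z} = (if z = w' then 1 else 0)"
    using pm_partner[OF assms(1), of b] assms(4) by auto
  show ?thesis
  proof (cases "w = b")
    case True
    have "hv a b I = (\<lambda>x. 0)"
    proof (rule hv_eqI)
      fix z assume "z \<noteq> a" "z \<noteq> b"
      then show "int (count I {a,z}) - int (count I {b,z}) = 0"
      proof -
        have "count I {b,a} = 1" using w' w True assms(2) by (metis insert_commute)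
        then have "w' = a" using w'(3) assms(2) by (metis zero_neq_one)
        then show ?thesis using w w' True \<open>z \<noteq> a\<close> \<open>z \<noteq> b\<close> by simp
      qed
    qed simp_all
    then show ?thesis using twohalf_zero by simp
  next
    case False
    have w'a: "w' \<noteq> a"
    proof
      assume "w' = a"
      then have "count I {a,b} = 1" using w' assms(2) by (metis insert_commute)
      then show False using w False assms(2) by (metis zero_neq_one)
    qed
    have "hv a b I = (\<lambda>x. 1 * ind w x + (-1) * ind w' x)"
    proof (rule hv_eqI)
      fix z assume "z \<noteq> a" "z \<noteq> b"
      then show "int (count I {a,z}) - int (count I {b,z}) = 1 * ind w z + (-1) * ind w' z"
        using w w' by (simp add: ind_def)
    next
      show "1 * ind w a + (-1) * ind w' a = 0" using w(1) w'a by (simp add: ind_def)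
    next
      show "1 * ind w b + (-1) * ind w' b = 0" using False w'(1) by (simp add: ind_def)
    qed
    then show ?thesis by (rule twohalfI[rotated 2]) simp_all
  qed
qed

lemma filter_image_size: "size (filter_mset P (image_mset f M)) = size (filter_mset (\<lambda>x. P (f x)) M)"
  by (induction M) auto

lemma pm_piE:
  assumes "perfect_matching {0..<n} I" "a < n" "b < n"
  shows "perfect_matching {0..<n} (piE a b I)"
  unfolding perfect_matching_def
proof (intro conjI ballI)
  fix e assume "e \<in># piE a b I"
  then obtain e0 where e0: "e0 \<in># I" "e = swp a b ` e0" unfolding piE_def by auto
  then have c: "card e0 = 2" "e0 \<subseteq> {0..<n}" using assms(1) unfolding perfect_matching_def by blast+
  have "card e = card e0" using e0(2) inj_swp by (metis card_image inj_on_subset subset_UNIV)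
  then show "card e = 2" using c by simp
  show "e \<subseteq> {0..<n}"
  proof
    fix x assume "x \<in> e"
    then obtain y where "y \<in> e0" "x = swp a b y" using e0(2) by blast
    then show "x \<in> {0..<n}" using c(2) assms(2,3) by (auto simp: swp_def)
  qed
next
  fix v assume v: "v \<in> {0..<n}"
  have "degree (piE a b I) v = size (filter_mset (\<lambda>e. v \<in> swp a b ` e) I)"
    unfolding degree_def piE_def by (rule filter_image_size)
  also have "(\<lambda>e. v \<in> swp a b ` e) = (\<lambda>e. swp a b v \<in> e)"
  proof (rule ext)
    fix e
    show "(v \<in> swp a b ` e) = (swp a b v \<in> e)"
      by (metis image_iff swp_swp)
  qed
  also have "size (filter_mset (\<lambda>e. swp a b v \<in> e) I) = degree I (swp a b v)" by (simp add: degree_def)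
  also have "\<dots> = 1" using assms v unfolding perfect_matching_def by (auto simp: swp_def)
  finally show "degree (piE a b I) v = 1" .
qed

lemma piE_empty[simp]: "piE a b {#} = {#}" by (simp add: piE_def)


lemma distinct_pairs:
  "distinct xs \<Longrightarrow> distinct (concat (map (\<lambda>k. map (Pair k) (g k)) xs)) \<longleftrightarrow> (\<forall>k\<in>set xs. distinct (g k))"
  by (induction xs) (auto simp: distinct_map inj_on_def)

lemma sum_list_concat_map: "sum_list (map f (concat xss)) = (\<Sum>xs\<leftarrow>xss. sum_list (map f xs))"
  by (induction xss) simp_all

lemma mem_sum_list: "u \<in> set U \<Longrightarrow> e \<in># f u \<Longrightarrow> e \<in># sum_list (map f U)"
  by (induction U) auto

lemma count_K_az:
  assumes "a < n" "z < n" "a \<noteq> z"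
  shows "count (complete_multigraph lam n) {a,z} = lam"
  unfolding count_complete by (rule if_P) (use assms in blast)

lemma count_K_big:
  assumes "z \<ge> n"
  shows "count (complete_multigraph lam n) {a,z} = 0"
proof -
  have "\<not> (\<exists>i j. i < n \<and> j < n \<and> i \<noteq> j \<and> {a,z} = {i,j})"
  proof
    assume "\<exists>i j. i < n \<and> j < n \<and> i \<noteq> j \<and> {a,z} = {i,j}"
    then obtain i j where ij: "i < n" "j < n" "{a,z} = {i,j}" by blast
    then have "z \<in> {i,j}" by (metis insertCI)
    then show False using ij assms by auto
  qed
  then show ?thesis unfolding count_complete by (rule if_not_P)
qed

lemma switch_step:
  fixes R :: "nat list list" and I L :: mgraph
  assumes K: "complete_multigraph lam n = sum_list (map cycle_edges R) + I + L"
    and R: "\<forall>G\<in>set R. distinct G \<and> length G \<ge> 2"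
    and I: "I = {#} \<or> perfect_matching {0..<n} I"
    and ab: "a \<noteq> b" "a < n" "b < n"
    and s: "s = 1 \<or> s = -1" "z0 \<noteq> a" "z0 \<noteq> b" "z0 < n"
           "s * (int (count L {b,z0}) - int (count L {a,z0})) > 0"
  shows "\<exists>R' I' z1 s1. length R' = length R \<and> (\<forall>k<length R. length (R'!k) = length (R!k) \<and> distinct (R'!k))
     \<and> (I = {#} \<longrightarrow> I' = {#}) \<and> (perfect_matching {0..<n} I \<longrightarrow> perfect_matching {0..<n} I')
     \<and> (s1 = 1 \<or> s1 = -1) \<and> z1 \<noteq> a \<and> z1 \<noteq> b \<and> z1 < n
     \<and> s1 * (int (count L {b,z1}) - int (count L {a,z1})) > 0
     \<and> (z1 = z0 \<longrightarrow> s1 = s \<and> s * (int (count L {b,z0}) - int (count L {a,z0})) \<ge> 2)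
     \<and> (\<forall>e. int (count (sum_list (map cycle_edges R') + I') e)
            = int (count (sum_list (map cycle_edges R) + I) e) + dlt n a b (\<lambda>x. s * ind z0 x + s1 * ind z1 x) e)"
proof -
  define Sm where "Sm = sum_list (map cycle_edges R) + I"
  have KS: "complete_multigraph lam n = Sm + L" using K by (simp add: Sm_def)
  have hvS: "hv a b Sm z = (if z \<noteq> a \<and> z \<noteq> b \<and> z < n then int (count L {b,z}) - int (count L {a,z}) else 0)" for z
  proof (cases "z \<noteq> a \<and> z \<noteq> b")
    case False then show ?thesis by (auto simp: hv_def)
  next
    case True
    show ?thesis
    proof (cases "z < n")
      case zn: True
      have "count Sm {a,z} + count L {a,z} = lam" using count_K_az[of a n z lam] ab zn True KS by simp
      moreover have "count Sm {b,z} + count L {b,z} = lam" using count_K_az[of b n z lam] ab zn True KS by simp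
      ultimately show ?thesis using True zn by (simp add: hv_def)
    next
      case False
      have "count Sm {a,z} + count L {a,z} = 0" using count_K_big[of n z lam a] False KS by simp
      moreover have "count Sm {b,z} + count L {b,z} = 0" using count_K_big[of n z lam b] False KS by simp
      ultimately show ?thesis using True False by (simp add: hv_def)
    qed
  qed
  have "\<forall>k. \<exists>Ps. k < length R \<longrightarrow> (cycle_edges (R!k) = sum_list Ps \<and> (\<forall>X\<in>set Ps. twohalf (hv a b X)) \<and>
     (\<forall>F. \<exists>vs'. length vs' = length (R!k) \<and> distinct vs' \<and> cycle_edges vs' = sel a b F Ps))"
  proof
    fix k
    show "\<exists>Ps. k < length R \<longrightarrow> (cycle_edges (R!k) = sum_list Ps \<and> (\<forall>X\<in>set Ps. twohalf (hv a b X)) \<and>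
     (\<forall>F. \<exists>vs'. length vs' = length (R!k) \<and> distinct vs' \<and> cycle_edges vs' = sel a b F Ps))"
    proof (cases "k < length R")
      case True
      then have "R!k \<in> set R" by simp
      then show ?thesis using cycle_piece[of "R!k" a b] R ab(1) by auto
    qed simp
  qed
  from choice[OF this] obtain Ps where Ps: "\<And>k. k < length R \<Longrightarrow> cycle_edges (R!k) = sum_list (Ps k) \<and> (\<forall>X\<in>set (Ps k). twohalf (hv a b X)) \<and>
     (\<forall>F. \<exists>vs'. length vs' = length (R!k) \<and> distinct vs' \<and> cycle_edges vs' = sel a b F (Ps k))" by blast
  define U0 where "U0 = concat (map (\<lambda>k. map (Pair k) [0..<length (Ps k)]) [0..<length R])"
  define U where "U = U0 @ [(length R, 0)]"
  define pc where "pc u = (if fst u < length R then Ps (fst u) ! snd u else I)" for u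
  have U0set: "u \<in> set U0 \<longleftrightarrow> fst u < length R \<and> snd u < length (Ps (fst u))" for u
    by (cases u) (auto simp: U0_def image_iff)
  have distU: "distinct U"
  proof -
    have "distinct U0" unfolding U0_def using distinct_pairs[of "[0..<length R]" "\<lambda>k. [0..<length (Ps k)]"] by simp
    moreover have "(length R, 0) \<notin> set U0" using U0set by simp
    ultimately show ?thesis unfolding U_def by simp
  qed
  have sumU0: "(\<Sum>u\<leftarrow>U0. G u) = (\<Sum>k\<leftarrow>[0..<length R]. \<Sum>p\<leftarrow>[0..<length (Ps k)]. G (k,p))" for G :: "nat \<times> nat \<Rightarrow> mgraph"
    unfolding U0_def by (simp add: sum_list_concat_map comp_def)
  have sumU: "(\<Sum>u\<leftarrow>U. pc u) = Sm"
  proof -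
    have "(\<Sum>u\<leftarrow>U0. pc u) = (\<Sum>k\<leftarrow>[0..<length R]. \<Sum>p\<leftarrow>[0..<length (Ps k)]. Ps k ! p)"
      unfolding sumU0 by (intro arg_cong[where f=sum_list] map_cong refl) (simp add: pc_def)
    also have "\<dots> = (\<Sum>k\<leftarrow>[0..<length R]. sum_list (Ps k))" by (simp add: map_nth)
    also have "\<dots> = (\<Sum>k\<leftarrow>[0..<length R]. cycle_edges (R!k))"
      by (intro arg_cong[where f=sum_list] map_cong refl) (use Ps in simp)
    also have "map (\<lambda>k. cycle_edges (R!k)) [0..<length R] = map cycle_edges R"
      by (rule nth_equalityI) simp_all
    finally show ?thesis by (simp add: U_def pc_def Sm_def)
  qed
  have thU: "\<forall>u\<in>set U. twohalf (hv a b (pc u))"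
  proof
    fix u assume "u \<in> set U"
    then consider "u \<in> set U0" | "u = (length R, 0)" by (auto simp: U_def)
    then show "twohalf (hv a b (pc u))"
    proof cases
      case 1
      then have "fst u < length R" "snd u < length (Ps (fst u))" using U0set by blast+
      then have "pc u \<in> set (Ps (fst u))" by (simp add: pc_def)
      then show ?thesis using Ps \<open>fst u < length R\<close> by blast
    next
      case 2
      then have "pc u = I" by (simp add: pc_def)
      then show ?thesis using I pm_twohalf[of n I a b] ab twohalf_zero' by auto
    qed
  qed
  have edgU: "\<forall>u\<in>set U. \<forall>e\<in>#pc u. \<exists>i j. i < n \<and> j < n \<and> i \<noteq> j \<and> e = {i,j}"
  proof (intro ballI)
    fix u e assume "u \<in> set U" "e \<in># pc u"
    then have "e \<in># Sm" using mem_sum_list[of u U e pc] sumU by simp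
    then have "count (complete_multigraph lam n) e > 0" using KS by simp
    show "\<exists>i j. i < n \<and> j < n \<and> i \<noteq> j \<and> e = {i,j}"
    proof (rule ccontr)
      assume "\<not> (\<exists>i j. i < n \<and> j < n \<and> i \<noteq> j \<and> e = {i,j})"
      then have "count (complete_multigraph lam n) e = 0" unfolding count_complete by (rule if_not_P)
      then show False using \<open>count (complete_multigraph lam n) e > 0\<close> by simp
    qed
  qed
  have s2: "s * hv a b (\<Sum>u\<leftarrow>U. pc u) z0 > 0" using s hvS[of z0] sumU by simp
  obtain S z1 s1 where sw: "s1 = 1 \<or> s1 = -1" "s1 * hv a b (\<Sum>u\<leftarrow>U. pc u) z1 > 0"
     "z1 = z0 \<longrightarrow> s1 = s \<and> s * hv a b (\<Sum>u\<leftarrow>U. pc u) z0 \<ge> 2"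
     "\<forall>e. int (count (\<Sum>u\<leftarrow>U. if u \<in> S then piE a b (pc u) else pc u) e)
             = int (count (\<Sum>u\<leftarrow>U. pc u) e) + dlt n a b (\<lambda>x. s * ind z0 x + s1 * ind z1 x) e"
    using global_switch[OF distU thU edgU ab s(1) s2] by blast
  have z1: "z1 \<noteq> a \<and> z1 \<noteq> b \<and> z1 < n" using sw(2) sumU hvS[of z1] by (auto split: if_splits)
  have "\<forall>k. \<exists>vs'. k < length R \<longrightarrow> length vs' = length (R!k) \<and> distinct vs' \<and> cycle_edges vs' = sel a b (\<lambda>p. (k,p) \<in> S) (Ps k)"
    using Ps by blast
  from choice[OF this] obtain RR where RR: "\<And>k. k < length R \<Longrightarrow> length (RR k) = length (R!k) \<and> distinct (RR k) \<and> cycle_edges (RR k) = sel a b (\<lambda>p. (k,p) \<in> S) (Ps k)"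
    by blast
  define R' where "R' = map RR [0..<length R]"
  define I' where "I' = (if (length R, 0) \<in> S then piE a b I else I)"
  have newsum: "(\<Sum>u\<leftarrow>U. if u \<in> S then piE a b (pc u) else pc u) = sum_list (map cycle_edges R') + I'"
  proof -
    have "(\<Sum>u\<leftarrow>U0. if u \<in> S then piE a b (pc u) else pc u)
        = (\<Sum>k\<leftarrow>[0..<length R]. \<Sum>p\<leftarrow>[0..<length (Ps k)]. if (k,p) \<in> S then piE a b (Ps k ! p) else Ps k ! p)"
      unfolding sumU0 by (intro arg_cong[where f=sum_list] map_cong refl) (simp add: pc_def)
    also have "\<dots> = (\<Sum>k\<leftarrow>[0..<length R]. cycle_edges (RR k))"
      by (intro arg_cong[where f=sum_list] map_cong refl) (use RR in \<open>simp add: sel_def\<close>)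
    also have "\<dots> = sum_list (map cycle_edges R')" by (simp add: R'_def comp_def)
    finally show ?thesis by (simp add: U_def pc_def I'_def)
  qed
  show ?thesis
  proof (rule exI[of _ R'], rule exI[of _ I'], rule exI[of _ z1], rule exI[of _ s1], intro conjI)
    show "length R' = length R" by (simp add: R'_def)
    show "\<forall>k<length R. length (R'!k) = length (R!k) \<and> distinct (R'!k)" using RR by (simp add: R'_def)
    show "I = {#} \<longrightarrow> I' = {#}" by (simp add: I'_def)
    show "perfect_matching {0..<n} I \<longrightarrow> perfect_matching {0..<n} I'" using pm_piE ab by (simp add: I'_def)
    show "s1 = 1 \<or> s1 = -1" by (rule sw(1))
    show "z1 \<noteq> a" "z1 \<noteq> b" "z1 < n" using z1 by simp_all
    show "s1 * (int (count L {b,z1}) - int (count L {a,z1})) > 0" using sw(2) sumU hvS[of z1] z1 by simp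
    show "z1 = z0 \<longrightarrow> s1 = s \<and> s * (int (count L {b,z0}) - int (count L {a,z0})) \<ge> 2"
      using sw(3) sumU hvS[of z0] s by simp
    show "\<forall>e. int (count (sum_list (map cycle_edges R') + I') e)
            = int (count (sum_list (map cycle_edges R) + I) e) + dlt n a b (\<lambda>x. s * ind z0 x + s1 * ind z1 x) e"
      using sw(4) newsum sumU by (simp add: Sm_def)
  qed
qed


definition pe :: "nat \<Rightarrow> nat \<Rightarrow> int \<Rightarrow> nat \<Rightarrow> mgraph" where
  "pe a b \<sigma> z = (if \<sigma> = 1 then {#{b,z}#} else {#{a,z}#})"
definition me :: "nat \<Rightarrow> nat \<Rightarrow> int \<Rightarrow> nat \<Rightarrow> mgraph" where
  "me a b \<sigma> z = (if \<sigma> = 1 then {#{a,z}#} else {#{b,z}#})"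

lemma dlt_scale: "dlt n a b (\<lambda>x. c * h x) e = c * dlt n a b h e"
  unfolding dlt_def sum_distrib_left by (rule sum.cong) (simp_all add: algebra_simps)

lemma dlt_two:
  assumes "z0 \<in> {0..<n} - {a,b}" "z1 \<in> {0..<n} - {a,b}"
  shows "dlt n a b (\<lambda>x. s * ind z0 x + s1 * ind z1 x) e
     = s * (of_bool (e = {b,z0}) - of_bool (e = {a,z0})) + s1 * (of_bool (e = {b,z1}) - of_bool (e = {a,z1}))"
  using dlt_add_fun[of n a b "\<lambda>x. s * ind z0 x" "\<lambda>x. s1 * ind z1 x" e]
    dlt_scale[of n a b s "ind z0" e] dlt_scale[of n a b s1 "ind z1" e] dlt_ind[OF assms(1)] dlt_ind[OF assms(2)]
  by simp

lemma pe_me_count: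
  assumes "\<sigma> = 1 \<or> \<sigma> = -1"
  shows "int (count (pe a b \<sigma> z) e) - int (count (me a b \<sigma> z) e) = \<sigma> * (of_bool (e = {b,z}) - of_bool (e = {a,z}))"
  using assms by (auto simp: pe_def me_def)

lemma finish_switch:
  assumes K: "Kg = S + L"
    and sw: "\<forall>e. int (count S' e) = int (count S e) + dlt n a b (\<lambda>x. s * ind z0 x + s1 * ind z1 x) e"
    and z: "z0 \<in> {0..<n} - {a,b}" "z1 \<in> {0..<n} - {a,b}"
    and s: "s = 1 \<or> s = -1" "s1 = 1 \<or> s1 = -1"
    and eq: "L' + pe a b s z0 + pe a b s1 z1 = L + me a b s z0 + me a b s1 z1"
  shows "Kg = S' + L'"
proof (rule multiset_eqI)
  fix e
  have "int (count L' e) + int (count (pe a b s z0) e) + int (count (pe a b s1 z1) e)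
      = int (count L e) + int (count (me a b s z0) e) + int (count (me a b s1 z1) e)"
    using arg_cong[OF eq, of "\<lambda>M. int (count M e)"] by simp
  then have "int (count L' e) + dlt n a b (\<lambda>x. s * ind z0 x + s1 * ind z1 x) e = int (count L e)"
    using dlt_two[OF z, of s s1 e] pe_me_count[OF s(1), of a b z0 e] pe_me_count[OF s(2), of a b z1 e]
    by linarith
  then have "int (count Kg e) = int (count (S' + L') e)"
    using sw K by simp
  then show "count Kg e = count (S' + L') e" by simp
qed

definition good :: "nat \<Rightarrow> nat \<Rightarrow> nat list list \<Rightarrow> mgraph \<Rightarrow> nat \<Rightarrow> bool" where
  "good lam n R I m \<longleftrightarrow> (\<exists>R' I' T1 T2. length R' = length R \<and> (\<forall>k<length R. length (R'!k) = length (R!k) \<and> distinct (R'!k))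
     \<and> (I = {#} \<longrightarrow> I' = {#}) \<and> (perfect_matching {0..<n} I \<longrightarrow> perfect_matching {0..<n} I')
     \<and> distinct T1 \<and> length T1 = m \<and> distinct T2 \<and> length T2 = 3
     \<and> complete_multigraph lam n = sum_list (map cycle_edges R') + I' + (cycle_edges T1 + cycle_edges T2))"

lemma good_trans:
  assumes "good lam n R' I' m" "length R' = length R" "\<forall>k<length R. length (R'!k) = length (R!k) \<and> distinct (R'!k)"
    "I = {#} \<longrightarrow> I' = {#}" "perfect_matching {0..<n} I \<longrightarrow> perfect_matching {0..<n} I'"
  shows "good lam n R I m"
  using assms unfolding good_def by (metis (no_types, lifting))

lemma goodI:
  assumes "length R' = length R" "\<forall>k<length R. length (R'!k) = length (R!k) \<and> distinct (R'!k)"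
    "I = {#} \<longrightarrow> I' = {#}" "perfect_matching {0..<n} I \<longrightarrow> perfect_matching {0..<n} I'"
    "distinct T1" "length T1 = m" "distinct T2" "length T2 = 3"
    "complete_multigraph lam n = sum_list (map cycle_edges R') + I' + (cycle_edges T1 + cycle_edges T2)"
  shows "good lam n R I m"
  unfolding good_def using assms by blast


lemma caseB:
  fixes R :: "nat list list" and I :: mgraph
  assumes K: "complete_multigraph lam n = sum_list (map cycle_edges R) + I + (cycle_edges (x0 # x1 # x2 # x3 # rest) + cycle_edges [x0,y])"
    and R: "\<forall>G\<in>set R. distinct G \<and> length G \<ge> 2"
    and I: "I = {#} \<or> perfect_matching {0..<n} I"
    and d: "distinct (x0 # x1 # x2 # x3 # rest)" "y \<notin> set (x0 # x1 # x2 # x3 # rest)"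
    and lt: "x0 < n" "x1 < n" "x2 < n" "x3 < n" "y < n"
  shows "good lam n R I (3 + length rest)"
proof -
  define Q where "Q = path_edges (x3 # rest @ [x0])"
  define L where "L = cycle_edges (x0 # x1 # x2 # x3 # rest) + cycle_edges [x0,y]"
  have LC: "L = add_mset {x0,x1} (add_mset {x1,x2} (add_mset {x2,x3} (add_mset {x0,y} (add_mset {y,x0} Q))))"
    unfolding L_def Q_def by (simp add: cycle_edges_Cons)
  have x2Q: "x2 \<notin> set (x3 # rest @ [x0])" "y \<notin> set (x3 # rest @ [x0])" using d by auto
  have ne: "x0 \<noteq> x1" "x0 \<noteq> x2" "x0 \<noteq> x3" "x1 \<noteq> x2" "x1 \<noteq> x3" "x2 \<noteq> x3"
    "y \<noteq> x0" "y \<noteq> x1" "y \<noteq> x2" "y \<noteq> x3" using d by auto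
  have cb: "count L {x2,z} = (if z = x1 then 1 else 0) + (if z = x3 then 1 else 0)" if "z \<noteq> x2" "z \<noteq> y" for z
  proof -
    have "\<And>z. count Q {x2,z} = 0" unfolding Q_def using count_path_notin[OF x2Q(1)] .
    then show ?thesis unfolding LC using ne that by (simp add: doubleton_eq_iff)
  qed
  have ca: "count L {y,z} = (if z = x0 then 2 else 0)" if "z \<noteq> x2" "z \<noteq> y" for z
  proof -
    have "\<And>z. count Q {y,z} = 0" unfolding Q_def using count_path_notin[OF x2Q(2)] .
    then show ?thesis unfolding LC using ne that by (simp add: doubleton_eq_iff)
  qed
  have K': "complete_multigraph lam n = sum_list (map cycle_edges R) + I + L" using K by (simp add: L_def)
  have pos: "(-1) * (int (count L {x2,x0}) - int (count L {y,x0})) > 0"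
    using cb[of x0] ca[of x0] ne by simp
  obtain R' I' z1 s1 where sw: "length R' = length R" "\<forall>k<length R. length (R'!k) = length (R!k) \<and> distinct (R'!k)"
     "I = {#} \<longrightarrow> I' = {#}" "perfect_matching {0..<n} I \<longrightarrow> perfect_matching {0..<n} I'"
     "s1 = 1 \<or> s1 = -1" "z1 \<noteq> y" "z1 \<noteq> x2" "z1 < n"
     "s1 * (int (count L {x2,z1}) - int (count L {y,z1})) > 0"
     "z1 = x0 \<longrightarrow> s1 = -1 \<and> (-1) * (int (count L {x2,x0}) - int (count L {y,x0})) \<ge> 2"
     "\<forall>e. int (count (sum_list (map cycle_edges R') + I') e)
            = int (count (sum_list (map cycle_edges R) + I) e) + dlt n y x2 (\<lambda>x. (-1) * ind x0 x + s1 * ind z1 x) e"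
    using switch_step[OF K' R I ne(9) lt(5) lt(3), of "-1" x0] ne lt pos by auto
  have z0V: "x0 \<in> {0..<n} - {y, x2}" using lt ne by auto
  have z1V: "z1 \<in> {0..<n} - {y, x2}" using sw(6,7,8) by auto
  have S: "complete_multigraph lam n = (sum_list (map cycle_edges R) + I) + L" using K' by simp
  have fin: "complete_multigraph lam n = (sum_list (map cycle_edges R') + I') + L'"
    if "L' + pe y x2 (-1) x0 + pe y x2 s1 z1 = L + me y x2 (-1) x0 + me y x2 s1 z1" for L'
    by (rule finish_switch[OF S sw(11) z0V z1V _ sw(5) that]) simp
  consider "z1 = x0" "s1 = -1" | "z1 = x1" "s1 = 1" | "z1 = x3" "s1 = 1"
  proof -
    have f: "s1 * ((if z1 = x1 then 1 else 0) + (if z1 = x3 then 1 else 0) - (if z1 = x0 then 2 else 0)) > 0"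
      using sw(9) cb[OF sw(7,6)] ca[OF sw(7,6)] ne by (simp split: if_split_asm)
    show ?thesis
    proof (cases "z1 = x0")
      case True then show ?thesis using sw(10) that by blast
    next
      case F0: False
      show ?thesis
      proof (cases "z1 = x1")
        case True then have "s1 = 1" using f ne sw(5) by auto
        then show ?thesis using True that by blast
      next
        case F1: False
        show ?thesis
        proof (cases "z1 = x3")
          case True then have "s1 = 1" using f ne sw(5) by auto
          then show ?thesis using True that by blast
        next
          case False then show ?thesis using f F0 F1 by simp
        qed
      qed
    qed
  qed
  then show ?thesis
  proof cases
    case 1
    define T2 where "T2 = [x0, x1, x2]"
    define T1 where "T1 = x0 # x2 # x3 # rest"
    have "cycle_edges T2 + cycle_edges T1 + pe y x2 (-1) x0 + pe y x2 s1 z1 = L + me y x2 (-1) x0 + me y x2 s1 z1"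
      unfolding T2_def T1_def LC Q_def using 1 by (simp add: cycle_edges_Cons pe_def me_def insert_commute add_mset_commute)
    then have KK: "complete_multigraph lam n = (sum_list (map cycle_edges R') + I') + (cycle_edges T1 + cycle_edges T2)"
      by (subst add.commute[of "cycle_edges T1"]) (rule fin)
    have "distinct T2" "length T2 = 3" "distinct T1" "length T1 = 3 + length rest"
      using d by (auto simp: T2_def T1_def)
    then show ?thesis using goodI[OF sw(1-4)] KK by blast
  next
    case 2
    define T2 where "T2 = [x0, x1, y]"
    define T1 where "T1 = x0 # x2 # x3 # rest"
    have "cycle_edges T2 + cycle_edges T1 + pe y x2 (-1) x0 + pe y x2 s1 z1 = L + me y x2 (-1) x0 + me y x2 s1 z1"
      unfolding T2_def T1_def LC Q_def using 2 by (simp add: cycle_edges_Cons pe_def me_def insert_commute add_mset_commute)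
    then have KK: "complete_multigraph lam n = (sum_list (map cycle_edges R') + I') + (cycle_edges T1 + cycle_edges T2)"
      by (subst add.commute[of "cycle_edges T1"]) (rule fin)
    have "distinct T2" "length T2 = 3" "distinct T1" "length T1 = 3 + length rest"
      using d by (auto simp: T2_def T1_def)
    then show ?thesis using goodI[OF sw(1-4)] KK by blast
  next
    case 3
    define T2 where "T2 = [x0, x1, x2]"
    define T1 where "T1 = x0 # y # x3 # rest"
    have "cycle_edges T2 + cycle_edges T1 + pe y x2 (-1) x0 + pe y x2 s1 z1 = L + me y x2 (-1) x0 + me y x2 s1 z1"
      unfolding T2_def T1_def LC Q_def using 3 by (simp add: cycle_edges_Cons pe_def me_def insert_commute add_mset_commute)
    then have KK: "complete_multigraph lam n = (sum_list (map cycle_edges R') + I') + (cycle_edges T1 + cycle_edges T2)"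
      by (subst add.commute[of "cycle_edges T1"]) (rule fin)
    have "distinct T2" "length T2 = 3" "distinct T1" "length T1 = 3 + length rest"
      using d by (auto simp: T2_def T1_def)
    then show ?thesis using goodI[OF sw(1-4)] KK by blast
  qed
qed


lemma cyc_split: "cycle_edges (x0 # A @ y # B) = path_edges (x0 # A @ [y]) + path_edges (y # B @ [x0])"
  using path_edges_append[of "x0 # A" y "B @ [x0]"] by (simp add: cycle_edges_Cons)

lemma caseA_base:
  assumes K: "complete_multigraph lam n = sum_list (map cycle_edges R) + I + (cycle_edges (x0 # A1 @ [y, d]) + cycle_edges [x0,y])"
    and d: "distinct (x0 # A1 @ [y, d])"
    and R: "\<forall>G\<in>set R. distinct G \<and> length G \<ge> 2"
  shows "good lam n R I (length A1 + 2)"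
proof -
  have e1: "cycle_edges (x0 # A1 @ [y, d]) = path_edges (x0 # A1 @ [y]) + {#{y,d},{d,x0}#}"
    using cyc_split[of x0 A1 y "[d]"] by simp
  have e2: "cycle_edges (x0 # A1 @ [y]) = path_edges (x0 # A1 @ [y]) + {#{y,x0}#}"
    using cyc_split[of x0 A1 y "[]"] by simp
  have "cycle_edges (x0 # A1 @ [y, d]) + cycle_edges [x0,y] = cycle_edges (x0 # A1 @ [y]) + cycle_edges [x0,y,d]"
    unfolding e1 e2 by (simp add: cycle_edges_Cons insert_commute add_mset_commute)
  then have "complete_multigraph lam n = sum_list (map cycle_edges R) + I + (cycle_edges (x0 # A1 @ [y]) + cycle_edges [x0,y,d])"
    using K by simp
  moreover have "distinct (x0 # A1 @ [y])" "length (x0 # A1 @ [y]) = length A1 + 2" "distinct [x0,y,d]" "length [x0,y,d] = 3"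
    using d by auto
  moreover have "\<forall>k<length R. length (R!k) = length (R!k) \<and> distinct (R!k)" using R by simp
  ultimately show ?thesis by (intro goodI[where R'=R and I'=I]) simp_all
qed

lemma caseA:
  assumes "A2 \<noteq> []"
    and "complete_multigraph lam n = sum_list (map cycle_edges R) + I + (cycle_edges (x0 # A1 @ y # A2) + cycle_edges [x0,y])"
    and "\<forall>G\<in>set R. distinct G \<and> length G \<ge> 2"
    and "I = {#} \<or> perfect_matching {0..<n} I"
    and "distinct (x0 # A1 @ y # A2)"
    and "\<forall>v\<in>set (x0 # A1 @ y # A2). v < n"
  shows "good lam n R I (length A1 + 1 + length A2)"
  using assms
proof (induction "length A2" arbitrary: A1 y A2 R I rule: less_induct)
  case less
  obtain b A2b where A2b: "A2 = b # A2b" using less.prems(1) by (cases A2) auto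
  show ?case
  proof (cases A2b)
    case Nil
    then have "good lam n R I (length A1 + 2)"
      using caseA_base[of lam n R I x0 A1 y b] less.prems A2b by simp
    then show ?thesis using A2b Nil by simp
  next
    case (Cons c A2')
    have A2: "A2 = b # c # A2'" using A2b Cons by simp
    define C where "C = x0 # A1 @ y # b # c # A2'"
    define p where "p = last (x0 # A1)"
    define P1 where "P1 = path_edges (x0 # A1 @ [y])"
    define P2 where "P2 = path_edges (c # A2' @ [x0])"
    define L where "L = cycle_edges C + cycle_edges [x0,y]"
    have dC: "distinct C" using less.prems(5) A2 by (simp add: C_def)
    have ltC: "\<forall>v\<in>set C. v < n" using less.prems(6) A2 by (simp add: C_def)
    have ne: "x0 \<noteq> y" "x0 \<noteq> b" "x0 \<noteq> c" "y \<noteq> b" "y \<noteq> c" "b \<noteq> c" using dC by (auto simp: C_def)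
    have lt: "x0 < n" "y < n" "b < n" "c < n" using ltC by (auto simp: C_def)
    have LC: "L = P1 + add_mset {y,b} (add_mset {b,c} (add_mset {x0,y} (add_mset {y,x0} P2)))"
      unfolding L_def C_def P1_def P2_def using cyc_split[of x0 A1 y "b # c # A2'"] by (simp add: cycle_edges_Cons)
    have nb1: "b \<notin> set (x0 # A1 @ [y])" "b \<notin> set (c # A2' @ [x0])" "y \<notin> set (c # A2' @ [x0])" "y \<notin> set (x0 # A1)"
      using dC by (auto simp: C_def)
    have cP1b: "\<And>z. count P1 {b,z} = 0" unfolding P1_def using count_path_notin[OF nb1(1)] .
    have cP2b: "\<And>z. count P2 {b,z} = 0" unfolding P2_def using count_path_notin[OF nb1(2)] .
    have cP2y: "\<And>z. count P2 {y,z} = 0" unfolding P2_def using count_path_notin[OF nb1(3)] .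
    have cP1y: "count P1 {y,z} = (if p = z then 1 else 0)" if "z \<noteq> y" for z
      unfolding P1_def p_def using count_path_last[OF nb1(4) that] by simp
    have cb: "count L {b,z} = (if z = c then 1 else 0)" if "z \<noteq> y" "z \<noteq> b" for z
      unfolding LC using cP1b cP2b ne that by (simp add: doubleton_eq_iff)
    have ca: "count L {y,z} = (if p = z then 1 else 0) + (if z = x0 then 2 else 0)" if "z \<noteq> y" "z \<noteq> b" for z
      unfolding LC using cP1y[OF that(1)] cP2y ne that by (simp add: doubleton_eq_iff)
    have pne: "p \<noteq> y" "p \<noteq> b" "p \<noteq> c" using dC by (auto simp: p_def C_def)
    have K': "complete_multigraph lam n = sum_list (map cycle_edges R) + I + L"
      using less.prems(2) A2 by (simp add: L_def C_def)
    have pos: "(-1) * (int (count L {b,x0}) - int (count L {y,x0})) > 0"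
      using cb[of x0] ca[of x0] ne by simp
    obtain R' I' z1 s1 where sw: "length R' = length R" "\<forall>k<length R. length (R'!k) = length (R!k) \<and> distinct (R'!k)"
       "I = {#} \<longrightarrow> I' = {#}" "perfect_matching {0..<n} I \<longrightarrow> perfect_matching {0..<n} I'"
       "s1 = 1 \<or> s1 = -1" "z1 \<noteq> y" "z1 \<noteq> b" "z1 < n"
       "s1 * (int (count L {b,z1}) - int (count L {y,z1})) > 0"
       "z1 = x0 \<longrightarrow> s1 = -1 \<and> (-1) * (int (count L {b,x0}) - int (count L {y,x0})) \<ge> 2"
       "\<forall>e. int (count (sum_list (map cycle_edges R') + I') e)
              = int (count (sum_list (map cycle_edges R) + I) e) + dlt n y b (\<lambda>x. (-1) * ind x0 x + s1 * ind z1 x) e"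
      using switch_step[OF K' less.prems(3) less.prems(4) ne(4) lt(2) lt(3), of "-1" x0] ne lt pos by auto
    have z0V: "x0 \<in> {0..<n} - {y, b}" using lt ne by auto
    have z1V: "z1 \<in> {0..<n} - {y, b}" using sw(6,7,8) by auto
    have S: "complete_multigraph lam n = (sum_list (map cycle_edges R) + I) + L" using K' by simp
    have fin: "complete_multigraph lam n = (sum_list (map cycle_edges R') + I') + L'"
      if "L' + pe y b (-1) x0 + pe y b s1 z1 = L + me y b (-1) x0 + me y b s1 z1" for L'
      by (rule finish_switch[OF S sw(11) z0V z1V _ sw(5) that]) simp
    have Rinv': "\<forall>G\<in>set R'. distinct G \<and> length G \<ge> 2"
    proof
      fix G assume "G \<in> set R'"
      then obtain k where k: "k < length R'" "G = R'!k" by (metis in_set_conv_nth)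
      then have "R!k \<in> set R" using sw(1) by simp
      then show "distinct G \<and> length G \<ge> 2" using less.prems(3) sw(1,2) k by auto
    qed
    have Iinv': "I' = {#} \<or> perfect_matching {0..<n} I'" using less.prems(4) sw(3,4) by blast
    have f: "s1 * ((if z1 = c then 1 else 0) - (if p = z1 then 1 else 0) - (if z1 = x0 then 2 else 0)) > 0"
      using sw(9) cb[OF sw(6,7)] ca[OF sw(6,7)] by (simp split: if_split_asm)
    consider "z1 = x0" "s1 = -1" | "z1 = c" "s1 = 1" | "z1 = p" "p \<noteq> x0" "s1 = -1"
    proof (cases "z1 = x0")
      case True then show ?thesis using sw(10) that by blast
    next
      case F0: False
      show ?thesis
      proof (cases "z1 = c")
        case True then have "s1 = 1" using f ne pne sw(5) F0 by auto
        then show ?thesis using True that by blast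
      next
        case F1: False
        show ?thesis
        proof (cases "z1 = p")
          case True then have "s1 = -1" using f ne pne sw(5) F0 F1 by auto
          then show ?thesis using True F0 that by blast
        next
          case False then show ?thesis using f F0 F1 by simp
        qed
      qed
    qed
    then show ?thesis
    proof cases
      case 1
      have "(cycle_edges C + cycle_edges [x0,b]) + pe y b (-1) x0 + pe y b s1 z1 = L + me y b (-1) x0 + me y b s1 z1"
        unfolding L_def using 1 by (simp add: cycle_edges_Cons pe_def me_def insert_commute add_mset_commute)
      then have KK: "complete_multigraph lam n = sum_list (map cycle_edges R') + I' + (cycle_edges (x0 # (A1 @ [y]) @ b # c # A2') + cycle_edges [x0,b])"
        using fin unfolding C_def by simp
      have "length (c # A2') < length A2" using A2 by simp
      moreover have "distinct (x0 # (A1 @ [y]) @ b # c # A2')" using dC by (simp add: C_def)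
      moreover have "\<forall>v\<in>set (x0 # (A1 @ [y]) @ b # c # A2'). v < n" using ltC by (simp add: C_def)
      ultimately have "good lam n R' I' (length (A1 @ [y]) + 1 + length (c # A2'))"
        using KK Rinv' Iinv' by (intro less.hyps) (simp_all, blast+)
      then have "good lam n R' I' (length A1 + 1 + length A2)" using A2 by simp
      then show ?thesis using good_trans sw(1-4) by blast
    next
      case 2
      define T1 where "T1 = x0 # A1 @ y # c # A2'"
      define T2 where "T2 = [x0, y, b]"
      have "cycle_edges T1 = P1 + add_mset {y,c} P2"
        unfolding T1_def P1_def P2_def using cyc_split[of x0 A1 y "c # A2'"] by simp
      then have "(cycle_edges T1 + cycle_edges T2) + pe y b (-1) x0 + pe y b s1 z1 = L + me y b (-1) x0 + me y b s1 z1"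
        unfolding LC T2_def using 2 by (simp add: cycle_edges_Cons pe_def me_def insert_commute add_mset_commute)
      then have KK: "complete_multigraph lam n = (sum_list (map cycle_edges R') + I') + (cycle_edges T1 + cycle_edges T2)"
        by (rule fin)
      have "distinct T1" "length T1 = length A1 + 1 + length A2" "distinct T2" "length T2 = 3"
        using dC A2 ne by (auto simp: T1_def T2_def C_def)
      then show ?thesis using goodI[OF sw(1-4)] KK by blast
    next
      case 3
      have "A1 \<noteq> []" using 3(2) by (auto simp: p_def)
      then obtain A1' where A1': "A1 = A1' @ [p]" unfolding p_def by (metis append_butlast_last_id last_ConsR)
      define T1 where "T1 = x0 # A1 @ b # c # A2'"
      define T2 where "T2 = [x0, y, b]"
      have P1s: "P1 = path_edges (x0 # A1' @ [p]) + {#{p,y}#}"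
        unfolding P1_def A1' using path_edges_append[of "x0 # A1'" p "[y]"] by simp
      have "cycle_edges T1 = path_edges (x0 # A1' @ [p]) + add_mset {p,b} (add_mset {b,c} P2)"
        unfolding T1_def P2_def A1' using cyc_split[of x0 A1' p "b # c # A2'"] by simp
      then have "(cycle_edges T1 + cycle_edges T2) + pe y b (-1) x0 + pe y b s1 z1 = L + me y b (-1) x0 + me y b s1 z1"
        unfolding LC T2_def P1s using 3 by (simp add: cycle_edges_Cons pe_def me_def insert_commute add_mset_commute)
      then have KK: "complete_multigraph lam n = (sum_list (map cycle_edges R') + I') + (cycle_edges T1 + cycle_edges T2)"
        by (rule fin)
      have "distinct T1" "length T1 = length A1 + 1 + length A2" "distinct T2" "length T2 = 3"
        using dC A2 ne by (auto simp: T1_def T2_def C_def)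
      then show ?thesis using goodI[OF sw(1-4)] KK by blast
    qed
  qed
qed


lemma cycle_edges_two: "cycle_edges [p,q] = {#{p,q},{q,p}#}"
  by (simp add: cycle_edges_Cons)

lemma core:
  assumes K: "complete_multigraph lam n = sum_list (map cycle_edges R) + I + (cycle_edges C + cycle_edges [p0,p1])"
    and R: "\<forall>G\<in>set R. distinct G \<and> length G \<ge> 2"
    and I: "I = {#} \<or> perfect_matching {0..<n} I"
    and C: "distinct C" "length C \<ge> 4" "\<forall>v\<in>set C. v < n"
    and P: "p0 \<noteq> p1" "p0 < n" "p1 < n"
    and sh: "set C \<inter> set [p0,p1] \<noteq> {}"
  shows "good lam n R I (length C - 1)"
proof -
  obtain x0 y where xy: "x0 \<in> set C" "cycle_edges [p0,p1] = cycle_edges [x0,y]" "y \<noteq> x0" "y < n"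
  proof (cases "p0 \<in> set C")
    case True then show ?thesis using that P by blast
  next
    case False
    then have "p1 \<in> set C" using sh by auto
    moreover have "cycle_edges [p0,p1] = cycle_edges [p1,p0]" by (simp add: cycle_edges_two insert_commute)
    ultimately show ?thesis using that P by blast
  qed
  obtain cs where cs: "cycle_edges C = cycle_edges (x0 # cs)" "mset (x0 # cs) = mset C"
    using rotate_to[OF xy(1)] by blast
  have dcs: "distinct (x0 # cs)" using mset_eq_imp_distinct_iff[OF cs(2)] C(1) by simp
  have lcs: "length cs = length C - 1" using mset_eq_length[OF cs(2)] by simp
  have scs: "set (x0 # cs) = set C" by (rule mset_eq_setD[OF cs(2)])
  have ltcs: "\<forall>v\<in>set (x0 # cs). v < n" using scs C(3) by simp
  have K2: "complete_multigraph lam n = sum_list (map cycle_edges R) + I + (cycle_edges (x0 # cs) + cycle_edges [x0,y])"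
    using K cs(1) xy(2) by simp
  show ?thesis
  proof (cases "y \<in> set cs")
    case True
    then obtain A1 A2 where A: "cs = A1 @ y # A2" by (meson split_list)
    show ?thesis
    proof (cases "A2 = []")
      case False
      have "good lam n R I (length A1 + 1 + length A2)"
        using caseA[OF False, of lam n R I x0 A1 y] K2 A R I dcs ltcs by simp
      then show ?thesis using lcs A by simp
    next
      case True
      have "cycle_edges (x0 # cs) = cycle_edges (x0 # rev cs)" by (simp add: cycle_edges_rev)
      also have "rev cs = [] @ y # rev A1" using A True by simp
      finally have ce: "cycle_edges (x0 # cs) = cycle_edges (x0 # [] @ y # rev A1)" .
      have "rev A1 \<noteq> []" using lcs C(2) A True by auto
      moreover have "distinct (x0 # [] @ y # rev A1)" using dcs A by auto
      moreover have "\<forall>v\<in>set (x0 # [] @ y # rev A1). v < n" using ltcs A by auto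
      ultimately have "good lam n R I (length ([]::nat list) + 1 + length (rev A1))"
        using caseA[of "rev A1" lam n R I x0 "[]" y] K2 ce R I by simp
      then show ?thesis using lcs A True by simp
    qed
  next
    case False
    obtain x1 x2 x3 rest where cs4: "cs = x1 # x2 # x3 # rest"
      using lcs C(2) by (cases cs; cases "tl cs"; cases "tl (tl cs)") auto
    have "good lam n R I (3 + length rest)"
      using caseB[of lam n R I x0 x1 x2 x3 rest y] K2 cs4 R I dcs False xy(3,4) ltcs by auto
    moreover have "3 + length rest = length C - 1" using lcs cs4 by simp
    ultimately show ?thesis by simp
  qed
qed


lemma perm_lengths:
  "image_mset f (mset xs) = mset ys \<Longrightarrow> \<exists>zs. mset zs = mset xs \<and> map f zs = ys"
proof (induction ys arbitrary: xs)
  case Nil then show ?case by simp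
next
  case (Cons y ys)
  then have "y \<in># image_mset f (mset xs)" by simp
  then obtain x where x: "x \<in> set xs" "f x = y" by auto
  have "image_mset f (mset (remove1 x xs)) = image_mset f (mset xs - {#x#})" by simp
  also have "\<dots> = image_mset f (mset xs) - {#f x#}" using x(1) by (simp add: image_mset_Diff)
  also have "\<dots> = mset ys" using Cons.prems x(2) by simp
  finally obtain zs where zs: "mset zs = mset (remove1 x xs)" "map f zs = ys" using Cons.IH by blast
  have "mset (x # zs) = mset xs" using zs(1) x(1) by simp
  then show ?case using zs(2) x(2) by (intro exI[of _ "x # zs"]) simp
qed

lemma sum_list_mset_eq: fixes f :: "'a \<Rightarrow> 'b::comm_monoid_add" assumes "mset xs = mset ys" shows "sum_list (map f xs) = sum_list (map f ys)"
proof -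
  have "sum_list (map f xs) = sum_mset (mset (map f xs))" by (simp only: sum_mset_sum_list)
  also have "\<dots> = sum_mset (image_mset f (mset xs))" by (simp only: mset_map)
  also have "\<dots> = sum_mset (image_mset f (mset ys))" using assms by simp
  also have "\<dots> = sum_mset (mset (map f ys))" by (simp only: mset_map)
  also have "\<dots> = sum_list (map f ys)" by (simp only: sum_mset_sum_list)
  finally show ?thesis .
qed

lemma verts_lt:
  assumes "distinct vs" "length vs \<ge> 2" "\<forall>e\<in>#cycle_edges vs. e \<in># complete_multigraph lam n"
  shows "\<forall>v\<in>set vs. v < n"
proof
  fix v assume v: "v \<in> set vs"
  obtain A where A: "cycle_edges vs = cycle_edges (v # A)" "mset (v # A) = mset vs" using rotate_to[OF v] by blast
  have "length (v # A) = length vs" by (rule mset_eq_length[OF A(2)])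
  then obtain b B where AB: "A = b # B" using assms(2) by (cases A) auto
  have "{v,b} \<in># cycle_edges vs" using A(1) AB by (simp add: cycle_edges_Cons)
  then have "count (complete_multigraph lam n) {v,b} > 0" using assms(3) by simp
  have "\<exists>i j. i < n \<and> j < n \<and> i \<noteq> j \<and> {v,b} = {i,j}"
  proof (rule ccontr)
    assume "\<not> (\<exists>i j. i < n \<and> j < n \<and> i \<noteq> j \<and> {v,b} = {i,j})"
    then have "count (complete_multigraph lam n) {v,b} = 0" unfolding count_complete by (rule if_not_P)
    then show False using \<open>count (complete_multigraph lam n) {v,b} > 0\<close> by simp
  qed
  then obtain i j where ij: "i < n" "j < n" "{v,b} = {i,j}" by blast
  have "v \<in> {i,j}" unfolding ij(3)[symmetric] by simp
  then show "v < n" using ij(1,2) by blast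
qed

lemma has_dec_intro:
  assumes "map length Gs = M'" "\<forall>G\<in>set Gs. distinct G \<and> length G \<ge> 2"
    "((\<forall>v\<in>V. even (degree E v)) \<and> I = {#} \<and> E = sum_list (map cycle_edges Gs))
     \<or> ((\<forall>v\<in>V. odd (degree E v)) \<and> perfect_matching V I \<and> E = sum_list (map cycle_edges Gs) + I)"
  shows "has_decomposition V E M'"
proof -
  have "is_decomposition V E M' Gs I"
    unfolding is_decomposition_def
  proof (intro conjI allI impI)
    show "length Gs = length M'" using assms(1) by auto
    fix k assume "k < length M'"
    then have k: "k < length Gs" using assms(1) by auto
    then have "Gs!k \<in> set Gs" by simp
    then show "is_cycle (M'!k) (Gs!k)" using assms(1,2) k unfolding is_cycle_def by auto
  qed (use assms(3) in auto)
  then show ?thesis unfolding has_decomposition_def by blast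
qed

theorem mainTheorem10:
  fixes M :: "nat list" and lam n m :: nat
  assumes "lam > 0" and "n > 0" and "m \<ge> 3"
    and "\<exists>Gs I i j. is_decomposition {0..<n} (complete_multigraph lam n) (M @ [m, 2]) Gs I
            \<and> i < length Gs \<and> j < length Gs \<and> length (Gs ! i) = m \<and> length (Gs ! j) = 2
            \<and> set (Gs ! i) \<inter> set (Gs ! j) \<noteq> {}"
  shows "has_decomposition {0..<n} (complete_multigraph lam n) (M @ [m - 1, 3])"
proof -
  let ?K = "complete_multigraph lam n" and ?V = "{0..<n}"
  obtain Gs I i j where dec: "is_decomposition ?V ?K (M @ [m, 2]) Gs I"
    and ij: "i < length Gs" "j < length Gs" "length (Gs ! i) = m" "length (Gs ! j) = 2"
      "set (Gs ! i) \<inter> set (Gs ! j) \<noteq> {}"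
    using assms(4) by blast
  have lenG: "length Gs = length (M @ [m,2])" using dec unfolding is_decomposition_def by blast
  have cycG: "\<And>k. k < length Gs \<Longrightarrow> is_cycle ((M @ [m,2]) ! k) (Gs ! k)"
    using dec lenG unfolding is_decomposition_def by auto
  have mapG: "map length Gs = M @ [m,2]"
    by (rule nth_equalityI) (use lenG cycG in \<open>auto simp: is_cycle_def\<close>)
  have invG: "\<forall>G\<in>set Gs. distinct G \<and> length G \<ge> 2"
  proof
    fix G assume "G \<in> set Gs"
    then obtain k where "k < length Gs" "G = Gs ! k" by (metis in_set_conv_nth)
    then show "distinct G \<and> length G \<ge> 2" using cycG unfolding is_cycle_def by auto
  qed
  have par: "((\<forall>v\<in>?V. even (degree ?K v)) \<and> I = {#} \<and> ?K = sum_list (map cycle_edges Gs))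
     \<or> ((\<forall>v\<in>?V. odd (degree ?K v)) \<and> perfect_matching ?V I \<and> ?K = sum_list (map cycle_edges Gs) + I)"
    using dec unfolding is_decomposition_def by blast
  have KG: "?K = sum_list (map cycle_edges Gs) + I" using par by auto
  have Iinv: "I = {#} \<or> perfect_matching ?V I" using par by blast
  have mlen: "image_mset length (mset Gs) = mset (M @ [m,2])"
    using arg_cong[OF mapG, of mset] by simp
  have final: "has_decomposition ?V ?K (M @ [m - 1, 3])"
    if X: "image_mset length (mset Xs) = mset (M @ [m - 1, 3])" "\<forall>G\<in>set Xs. distinct G \<and> length G \<ge> 2"
       "?K = sum_list (map cycle_edges Xs) + I'" "I = {#} \<longrightarrow> I' = {#}"
       "perfect_matching ?V I \<longrightarrow> perfect_matching ?V I'" for Xs I'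
  proof -
    obtain zs where zs: "mset zs = mset Xs" "map length zs = M @ [m - 1, 3]" using perm_lengths[OF X(1)] by blast
    have "set zs = set Xs" using zs(1) by (metis set_mset_mset)
    then have inv: "\<forall>G\<in>set zs. distinct G \<and> length G \<ge> 2" using X(2) by simp
    have S: "sum_list (map cycle_edges zs) = sum_list (map cycle_edges Xs)" by (rule sum_list_mset_eq[OF zs(1)])
    have "((\<forall>v\<in>?V. even (degree ?K v)) \<and> I' = {#} \<and> ?K = sum_list (map cycle_edges zs))
     \<or> ((\<forall>v\<in>?V. odd (degree ?K v)) \<and> perfect_matching ?V I' \<and> ?K = sum_list (map cycle_edges zs) + I')"
      using par X(3,4,5) S by auto
    then show ?thesis by (rule has_dec_intro[OF zs(2) inv])
  qed
  show ?thesis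
  proof (cases "m = 3")
    case True
    have "mset (M @ [m,2]) = mset (M @ [m - 1, 3])" using True by simp
    then show ?thesis using final[of Gs I] mlen invG KG by simp
  next
    case False
    then have m4: "m \<ge> 4" using assms(3) by simp
    define C where "C = Gs ! i"
    define P where "P = Gs ! j"
    have CP: "C \<noteq> P" using ij m4 by (auto simp: C_def P_def)
    have Cin: "C \<in> set Gs" "P \<in> set Gs" using ij by (simp_all add: C_def P_def)
    define R where "R = remove1 P (remove1 C Gs)"
    have Pin': "P \<in> set (remove1 C Gs)" using Cin CP by (simp add: in_set_remove1)
    have msetG: "mset Gs = mset R + {#C, P#}"
    proof -
      define G1 where "G1 = remove1 C Gs"
      have e1: "mset G1 = mset Gs - {#C#}" by (simp only: G1_def mset_remove1)
      have e2: "mset R = mset G1 - {#P#}" by (simp only: R_def G1_def[symmetric] mset_remove1)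
      have "P \<in> set G1" using Pin' by (simp only: G1_def)
      then have "P \<in># mset G1" by (simp only: set_mset_mset)
      then have e3: "mset G1 = add_mset P (mset R)" using e2 by (simp add: insert_DiffM)
      have "C \<in># mset Gs" using Cin(1) by simp
      then have "mset Gs = add_mset C (mset G1)" using e1 by (simp add: insert_DiffM)
      then show ?thesis using e3 by simp
    qed
    have setR: "set R \<subseteq> set Gs" unfolding R_def by (meson notin_set_remove1 subsetI)
    have Rinv: "\<forall>G\<in>set R. distinct G \<and> length G \<ge> 2" using invG setR by blast
    have sumG: "sum_list (map cycle_edges Gs) = sum_list (map cycle_edges R) + (cycle_edges C + cycle_edges P)"
      using arg_cong[OF msetG, of "\<lambda>X. sum_mset (image_mset cycle_edges X)"]
      by (simp add: sum_mset_sum_list[symmetric] mset_map)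
    obtain p0 p1 where P01: "P = [p0, p1]" using ij(4) unfolding P_def
      by (metis (no_types, lifting) One_nat_def Suc_1 length_0_conv length_Suc_conv)
    have Pd: "distinct P" "length P \<ge> 2" using invG Cin by auto
    have Cd: "distinct C" "length C \<ge> 2" using invG Cin by auto
    have sub: "\<forall>e\<in>#cycle_edges X. e \<in># ?K" if "X \<in> set Gs" for X
    proof -
      have "cycle_edges X \<subseteq># sum_list (map cycle_edges Gs)" using that
        by (induction Gs) (auto intro: subset_mset.add_increasing2 subset_mset.add_increasing)
      then show ?thesis using KG by (metis mset_subset_eqD union_iff)
    qed
    have Clt: "\<forall>v\<in>set C. v < n" using verts_lt[OF Cd sub[OF Cin(1)]] .
    have Plt: "\<forall>v\<in>set P. v < n" using verts_lt[OF Pd sub[OF Cin(2)]] .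
    have K3: "?K = sum_list (map cycle_edges R) + I + (cycle_edges C + cycle_edges [p0,p1])"
      using KG sumG P01 by (simp add: ac_simps)
    have "good lam n R I (length C - 1)"
      by (rule core[OF K3 Rinv Iinv Cd(1)]) (use ij m4 Clt Plt Pd P01 in \<open>auto simp: C_def P_def\<close>)
    then obtain R' I' T1 T2 where g: "length R' = length R" "\<forall>k<length R. length (R'!k) = length (R!k) \<and> distinct (R'!k)"
       "I = {#} \<longrightarrow> I' = {#}" "perfect_matching ?V I \<longrightarrow> perfect_matching ?V I'"
       "distinct T1" "length T1 = length C - 1" "distinct T2" "length T2 = 3"
       "?K = sum_list (map cycle_edges R') + I' + (cycle_edges T1 + cycle_edges T2)"
      unfolding good_def by blast
    have mapR: "map length R' = map length R" by (rule nth_equalityI) (use g(1,2) in simp_all)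
    have mR: "image_mset length (mset R) = mset M"
    proof -
      have "image_mset length (mset R) + {#m, 2#} = mset (M @ [m,2])"
        using mlen msetG ij(3,4) by (simp add: C_def P_def)
      then show ?thesis by simp
    qed
    define Xs where "Xs = R' @ [T1, T2]"
    have "image_mset length (mset Xs) = mset (M @ [m - 1, 3])"
    proof -
      have "image_mset length (mset R') = image_mset length (mset R)"
        using arg_cong[OF mapR, of mset] by simp
      then show ?thesis using mR g(6,8) ij(3) by (simp add: Xs_def C_def)
    qed
    moreover have "\<forall>G\<in>set Xs. distinct G \<and> length G \<ge> 2"
    proof
      fix G assume "G \<in> set Xs"
      then consider "G \<in> set R'" | "G = T1" | "G = T2" by (auto simp: Xs_def)
      then show "distinct G \<and> length G \<ge> 2"
      proof cases
        case 1
        then obtain k where k: "k < length R'" "G = R'!k" by (metis in_set_conv_nth)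
        then have "R!k \<in> set R" using g(1) by simp
        then show ?thesis using Rinv g(1,2) k by auto
      qed (use g(5-8) ij(3) m4 in \<open>auto simp: C_def\<close>)
    qed
    moreover have "?K = sum_list (map cycle_edges Xs) + I'" using g(9) by (simp add: Xs_def ac_simps)
    ultimately show ?thesis using final g(3,4) by blast
  qed
qed


end
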